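(* Let $Q\in\mathbb{R}^{N\times N}$ be symmetric positive definite, $c\in\mathbb{R}^N$, and consider the convex quadratic program $\min_{z\in\mathbb{R}^N}\ \tfrac12 z^TQz-c^Tz$, with unique minimizer $z^*$. Let $\mathcal{N}=\{1,\dots,N\}$ be partitioned into nonempty disjoint sets $\mathcal{N}_1,\dots,\mathcal{N}_K$, and let the lifted data $Q_k,c_k,\Pi_{kk'}$ ($k,k'\in\{1,\dots,K\}$) be constructed as described in the context. Consider the Gauss–Seidel (GS) scheme: starting from arbitrary initial vectors $z_k^0\in\mathbb{R}^{N_k+\underline{N}_k}$, $\lambda_k^0\in\mathbb{R}^{\underline{N}_k}$, for $\ell=0,1,2,\dots$ and for $k=1,2,\dots,K$ in this order, let $z_k^{\ell+1}$ and $\lambda_k^{\ell+1}$ be the primal solution and the multiplier of the equality constraint of \[ \min_{z_k}\ \tfrac12 z_k^TQ_kz_k-z_k^T\Big(c_k-\sum_{k'=1}^{k-1}\Pi_{k'k}^T\lambda_{k'}^{\ell+1}-\sum_{k'=k+1}^{K}\Pi_{k'k}^T\lambda_{k'}^{\ell}\Big) \] \[ \text{s.t.}\quad \Pi_{kk}z_k+\sum_{k'=1}^{k-1}\Pi_{kk'}z_{k'}^{\ell+1}+\sum_{k'=k+1}^{K}\Pi_{kk'}z_{k'}^{\ell}=0\quad(\lambda_k), \] i.e. $(z_k^{\ell+1},\lambda_k^{\ell+1})$ solves $\begin{bmatrix}Q_k&\Pi_{kk}^T\\ \Pi_{kk}&0\end{bmatrix}\begin{bmatrix}z_k^{\ell+1}\\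 \lambda_k^{\ell+1}\end{bmatrix}=\begin{bmatrix}c_k\\0\end{bmatrix}-\sum_{k'<k}\begin{bmatrix}\Pi_{k'k}^T\lambda_{k'}^{\ell+1}\\ \Pi_{kk'}z_{k'}^{\ell+1}\end{bmatrix}-\sum_{k'>k}\begin{bmatrix}\Pi_{k'k}^T\lambda_{k'}^{\ell}\\ \Pi_{kk'}z_{k'}^{\ell}\end{bmatrix}$. Define the block matrices (blocks indexed by $k,k'\in\{1,\dots,K\}$, with block rows/columns of sizes matching $z_1,\dots,z_K$ and $\lambda_1,\dots,\lambda_K$) \[ L:=\begin{bmatrix}D & M\\ P & 0\end{bmatrix},\qquad R:=\begin{bmatrix}0 & G\\ H & 0\end{bmatrix}, \] where $D=\mathrm{blockdiag}(Q_1,\dots,Q_K)$; $M$ has $(k,k')$ block $\Pi_{k'k}^T$ if $k'\le k$ and $0$ otherwise; $P$ has $(k,k')$ block $\Pi_{kk'}$ if $k'\le k$ and $0$ otherwise; $G$ has $(k,k')$ block $-\Pi_{k'k}^T$ if $k'>k$ and $0$ otherwise; $H$ has $(k,k')$ block $-\Pi_{kk'}$ if $k'>k$ and $0$ otherwise. Let $\Sigma:=L^{-1}R$. If all eigenvalues of $\Sigma$ have magnitude less than one, then the GS scheme converges to the solution of the quadratic program, i.e. for every $k$, $z_k^\ell\to \bar z_k^*$ as $\ell\to\infty$, where $\bar z_k^*$ is the vector with entries $z^*(k_1),\dots,z^*(k_{N_k+\underline{N}_k})$.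
   Context: Lifting construction. For each $k$, let $\underline{\mathcal{N}}_k:=\{j\in\mathcal{N}\setminus\mathcal{N}_k:\exists\, i\in\mathcal{N}_k \text{ with } Q_{ij}\neq 0\}$ and $\overline{\mathcal{N}}_k:=\mathcal{N}_k\cup\underline{\mathcal{N}}_k$. Write $\mathcal{N}_k=\{k_1,\dots,k_{N_k}\}$ and $\underline{\mathcal{N}}_k=\{k_{N_k+1},\dots,k_{N_k+\underline{N}_k}\}$, with $N_k=|\mathcal{N}_k|$, $\underline{N}_k=|\underline{\mathcal{N}}_k|$. The lifted variable of partition $k$ is $z_k\in\mathbb{R}^{N_k+\underline{N}_k}$, whose $i$-th entry is a copy of the original variable $z(k_i)$ (the last $\underline{N}_k$ entries are duplicates of variables owned by other partitions). The matrix $Q_k\in\mathbb{R}^{(N_k+\underline N_k)\times(N_k+\underline N_k)}$ has entries $(Q_k)_{ij}=Q_{k_ik_j}$ if $k_i,k_j\in\mathcal{N}_k$; $(Q_k)_{ij}=\tfrac12 Q_{k_ik_j}$ if exactly one of $k_i,k_j$ lies in $\mathcal{N}_k$; and $0$ otherwise. The vector $c_k$ has entries $(c_k)_i=c_{k_i}$ if $k_i\in\mathcal{N}_k$ and $0$ otherwise. The matrix $\Pi_{kk}\in\mathbb{R}^{\underline{N}_k\times(N_k+\underline{N}_k)}$ has rows $e_{N_k+1}^T,\dots,e_{N_k+\underline{N}_k}^T$ (elementary unit vectors). For $k'\neq k$, $\Pi_{kk'}\in\mathbb{R}^{\underline N_k\times(N_{k'}+\underline N_{k'})}$ has, in row $r$,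 an entry $-1$ at the position $s\le N_{k'}$ with $k'_s=k_{N_k+r}$ if $k_{N_k+r}\in\mathcal{N}_{k'}$, and is zero otherwise; thus the constraints $\sum_{k'}\Pi_{kk'}z_{k'}=0$ force each duplicate in partition $k$ to equal the corresponding variable owned by another partition. The lifted problem is $\min\sum_k \tfrac12 z_k^TQ_kz_k-c_k^Tz_k$ s.t. $\sum_{k'}\Pi_{kk'}z_{k'}=0$ ($k=1,\dots,K$), with multipliers $\lambda_k$. *)

theory Defs
  imports "HOL-Analysis.Analysis" "Jordan_Normal_Form.Char_Poly" "Jordan_Normal_Form.Gauss_Jordan_Elimination"
begin

text \<open>Indices of original variables are 0..N-1, partitions are 0..K-1 (order preserved).
  own k enumerates N_k (the k_1..k_{N_k}), dup k enumerates the coupled set (k_{N_k+1},...).\<close>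

definition dupset :: "real mat \<Rightarrow> nat \<Rightarrow> (nat \<Rightarrow> nat set) \<Rightarrow> nat \<Rightarrow> nat set" where
  "dupset Q N Ns k = {j \<in> {..<N} - Ns k. \<exists>i\<in>Ns k. Q $$ (i, j) \<noteq> 0}"

definition nbar :: "(nat \<Rightarrow> nat list) \<Rightarrow> (nat \<Rightarrow> nat list) \<Rightarrow> nat \<Rightarrow> nat list" where
  "nbar own dup k = own k @ dup k"

definition lenk :: "(nat \<Rightarrow> nat list) \<Rightarrow> (nat \<Rightarrow> nat list) \<Rightarrow> nat \<Rightarrow> nat" where
  "lenk own dup k = length (own k) + length (dup k)"

definition Qloc :: "real mat \<Rightarrow> (nat \<Rightarrow> nat set) \<Rightarrow> (nat \<Rightarrow> nat list) \<Rightarrow> (nat \<Rightarrow> nat list) \<Rightarrow> nat \<Rightarrow> real mat" where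
  "Qloc Q Ns own dup k = mat (lenk own dup k) (lenk own dup k) (\<lambda>(i, j).
     let a = nbar own dup k ! i; b = nbar own dup k ! j in
     if a \<in> Ns k \<and> b \<in> Ns k then Q $$ (a, b)
     else if a \<in> Ns k \<or> b \<in> Ns k then Q $$ (a, b) / 2 else 0)"

definition cloc :: "real vec \<Rightarrow> (nat \<Rightarrow> nat set) \<Rightarrow> (nat \<Rightarrow> nat list) \<Rightarrow> (nat \<Rightarrow> nat list) \<Rightarrow> nat \<Rightarrow> real vec" where
  "cloc c Ns own dup k = vec (lenk own dup k) (\<lambda>i.
     if nbar own dup k ! i \<in> Ns k then c $ (nbar own dup k ! i) else 0)"

definition PiM :: "(nat \<Rightarrow> nat list) \<Rightarrow> (nat \<Rightarrow> nat list) \<Rightarrow> nat \<Rightarrow> nat \<Rightarrow> real mat" where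
  "PiM own dup k k' =
     (if k = k' then mat (length (dup k)) (lenk own dup k) (\<lambda>(r, s). if s = length (own k) + r then 1 else 0)
      else mat (length (dup k)) (lenk own dup k') (\<lambda>(r, s).
        if s < length (own k') \<and> own k' ! s = dup k ! r then -1 else 0))"

definition off :: "(nat \<Rightarrow> nat) \<Rightarrow> nat \<Rightarrow> nat" where
  "off sz k = (\<Sum>k'<k. sz k')"

definition blk :: "(nat \<Rightarrow> nat) \<Rightarrow> nat \<Rightarrow> nat" where
  "blk sz p = (LEAST k. p < off sz (Suc k))"

definition blockmat :: "nat \<Rightarrow> (nat \<Rightarrow> nat) \<Rightarrow> (nat \<Rightarrow> nat) \<Rightarrow> (nat \<Rightarrow> nat \<Rightarrow> real mat) \<Rightarrow> real mat" where
  "blockmat K rs cs f = mat (off rs K) (off cs K) (\<lambda>(p, q).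
     let k = blk rs p; k' = blk cs q in f k k' $$ (p - off rs k, q - off cs k'))"

definition Lmat :: "real mat \<Rightarrow> (nat \<Rightarrow> nat set) \<Rightarrow> nat \<Rightarrow> (nat \<Rightarrow> nat list) \<Rightarrow> (nat \<Rightarrow> nat list) \<Rightarrow> real mat" where
  "Lmat Q Ns K own dup =
     (let zs = lenk own dup; ls = (\<lambda>k. length (dup k));
          D = blockmat K zs zs (\<lambda>k k'. if k = k' then Qloc Q Ns own dup k else 0\<^sub>m (zs k) (zs k'));
          M = blockmat K zs ls (\<lambda>k k'. if k' \<le> k then transpose_mat (PiM own dup k' k) else 0\<^sub>m (zs k) (ls k'));
          P = blockmat K ls zs (\<lambda>k k'. if k' \<le> k then PiM own dup k k' else 0\<^sub>m (ls k) (zs k'))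
      in four_block_mat D M P (0\<^sub>m (off ls K) (off ls K)))"

definition Rmat :: "nat \<Rightarrow> (nat \<Rightarrow> nat list) \<Rightarrow> (nat \<Rightarrow> nat list) \<Rightarrow> real mat" where
  "Rmat K own dup =
     (let zs = lenk own dup; ls = (\<lambda>k. length (dup k));
          G = blockmat K zs ls (\<lambda>k k'. if k < k' then - transpose_mat (PiM own dup k' k) else 0\<^sub>m (zs k) (ls k'));
          H = blockmat K ls zs (\<lambda>k k'. if k < k' then - PiM own dup k k' else 0\<^sub>m (ls k) (zs k'))
      in four_block_mat (0\<^sub>m (off zs K) (off zs K)) G H (0\<^sub>m (off ls K) (off ls K)))"

text \<open>Sigma = L^{-1} R (L is invertible under the hypotheses of the theorem).\<close>
definition Sigma :: "real mat \<Rightarrow> (nat \<Rightarrow> nat set) \<Rightarrow> nat \<Rightarrow> (nat \<Rightarrow> nat list) \<Rightarrow> (nat \<Rightarrow> nat list) \<Rightarrow> real mat" where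
  "Sigma Q Ns K own dup = the (mat_inverse (Lmat Q Ns K own dup)) * Rmat K own dup"

end

theory Submission
  imports Defs "Jordan_Normal_Form.Spectral_Radius"
begin


lemma sum_lt_add: "(\<Sum>q<a + b. h q) = (\<Sum>q<a. h q) + (\<Sum>q<b. h (a + q :: nat))"
  by (induction b) (simp_all add: ac_simps)

lemma off_Suc[simp]: "off sz (Suc k) = off sz k + sz k"
  unfolding off_def by simp

lemma off_0[simp]: "off sz 0 = 0" unfolding off_def by simp

lemma off_mono: "k \<le> k' \<Longrightarrow> off sz k \<le> off sz k'"
  unfolding off_def by (rule sum_mono2) auto

lemma blk_eq: assumes "j < sz k" shows "blk sz (off sz k + j) = k"
  unfolding blk_def
proof (rule Least_equality)
  show "off sz k + j < off sz (Suc k)" using assms by simp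
  fix y assume y: "off sz k + j < off sz (Suc y)"
  show "k \<le> y"
  proof (rule ccontr)
    assume "\<not> k \<le> y" hence "Suc y \<le> k" by simp
    from off_mono[OF this, of sz] y show False by simp
  qed
qed

lemma sum_blocks: "(\<Sum>q<off sz K. g q) = (\<Sum>k<K. \<Sum>j<sz k. g (off sz k + j))"
proof (induction K)
  case (Suc K)
  have "(\<Sum>q<off sz K + sz K. g q) = (\<Sum>q<off sz K. g q) + (\<Sum>j<sz K. g (off sz K + j))"
    by (rule sum_lt_add)
  thus ?case using Suc by simp
qed simp

lemma block_all: assumes "\<And>k j. k < K \<Longrightarrow> j < sz k \<Longrightarrow> P (off sz k + j)"
  and "p < off sz K" shows "P p"
  using assms
proof (induction K)
  case (Suc K)
  show ?case
  proof (cases "p < off sz K")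
    case True thus ?thesis using Suc by auto
  next
    case False
    hence "p = off sz K + (p - off sz K)" by simp
    moreover have "p - off sz K < sz K" using False Suc.prems by simp
    ultimately show ?thesis using Suc.prems(1)[of K "p - off sz K"] by simp
  qed
qed simp

lemma blockmat_carrier: "blockmat K rs cs f \<in> carrier_mat (off rs K) (off cs K)"
  unfolding blockmat_def by simp

lemma blockmat_index: assumes "k < K" "i < rs k" "k' < K" "j < cs k'"
  shows "blockmat K rs cs f $$ (off rs k + i, off cs k' + j) = f k k' $$ (i, j)"
proof -
  have "off rs k + i < off rs (Suc k)" using assms by simp
  also have "\<dots> \<le> off rs K" using assms by (intro off_mono) simp
  finally have 1: "off rs k + i < off rs K" .
  have "off cs k' + j < off cs (Suc k')" using assms by simp
  also have "\<dots> \<le> off cs K" using assms by (intro off_mono) simp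
  finally have 2: "off cs k' + j < off cs K" .
  show ?thesis unfolding blockmat_def using 1 2 assms by (simp add: blk_eq)
qed

lemma blockmat_rowsum: assumes "k < K" "i < rs k"
  shows "(\<Sum>q<off cs K. blockmat K rs cs f $$ (off rs k + i, q) * g q)
     = (\<Sum>k'<K. \<Sum>j<cs k'. f k k' $$ (i, j) * g (off cs k' + j))"
  unfolding sum_blocks[where sz=cs and K=K]
  by (intro sum.cong refl, subst blockmat_index, insert assms, auto)

lemma four_block_rowsum:
  assumes "A \<in> carrier_mat nr1 nc1" "B \<in> carrier_mat nr1 nc2" "C \<in> carrier_mat nr2 nc1" "D \<in> carrier_mat nr2 nc2"
   and "x \<in> carrier_vec (nc1 + nc2)" 
  shows "i < nr1 \<Longrightarrow> (four_block_mat A B C D *\<^sub>v x) $ i = (\<Sum>q<nc1. A $$ (i,q) * x $ q) + (\<Sum>q<nc2. B $$ (i,q) * x $ (nc1 + q))"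
   "i < nr2 \<Longrightarrow> (four_block_mat A B C D *\<^sub>v x) $ (nr1 + i) = (\<Sum>q<nc1. C $$ (i,q) * x $ q) + (\<Sum>q<nc2. D $$ (i,q) * x $ (nc1 + q))"
proof -
  have s: "\<And>h. (\<Sum>q<nc1 + nc2. h q) = (\<Sum>q<nc1. h q) + (\<Sum>q<nc2. h (nc1 + q))"
    by (rule sum_lt_add)
  show "i < nr1 \<Longrightarrow> (four_block_mat A B C D *\<^sub>v x) $ i = (\<Sum>q<nc1. A $$ (i,q) * x $ q) + (\<Sum>q<nc2. B $$ (i,q) * x $ (nc1 + q))"
    using assms unfolding mult_mat_vec_def scalar_prod_def
    by (simp add: s atLeast0LessThan)
  show "i < nr2 \<Longrightarrow> (four_block_mat A B C D *\<^sub>v x) $ (nr1 + i) = (\<Sum>q<nc1. C $$ (i,q) * x $ q) + (\<Sum>q<nc2. D $$ (i,q) * x $ (nc1 + q))"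
    using assms unfolding mult_mat_vec_def scalar_prod_def
    by (simp add: s atLeast0LessThan)
qed

lemma sum_if_le: "k < (K::nat) \<Longrightarrow> (\<Sum>k'<K. if k' \<le> k then F k' else 0) = (\<Sum>k'<k. F k') + (F k :: real)"
proof -
  assume k: "k < K"
  have "(\<Sum>k'<K. if k' \<le> k then F k' else 0) = (\<Sum>k'\<in>{..<K} \<inter> {k'. k' \<le> k}. F k')"
    by (subst sum.inter_restrict) auto
  also have "{..<K} \<inter> {k'. k' \<le> k} = insert k {..<k}" using k by auto
  finally show ?thesis by simp
qed

lemma sum_if_gt: "(\<Sum>k'<(K::nat). if k < k' then F k' else 0) = (\<Sum>k'\<in>{k<..<K}. (F k' :: real))"
proof -
  have "(\<Sum>k'<K. if k < k' then F k' else 0) = (\<Sum>k'\<in>{..<K} \<inter> {k'. k < k'}. F k')"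
    by (subst sum.inter_restrict) auto
  also have "{..<K} \<inter> {k'. k < k'} = {k<..<K}" by auto
  finally show ?thesis .
qed

locale gs_setup =
  fixes N K :: nat and Q :: "real mat" and c :: "real vec" and Ns :: "nat \<Rightarrow> nat set" and own dup :: "nat \<Rightarrow> nat list"
  assumes Qdim: "Q \<in> carrier_mat N N" and cdim: "c \<in> carrier_vec N"
    and Qsym: "transpose_mat Q = Q"
    and Qpd: "\<And>x. x \<in> carrier_vec N \<Longrightarrow> x \<noteq> 0\<^sub>v N \<Longrightarrow> x \<bullet> (Q *\<^sub>v x) > 0"
    and part_disj: "\<And>k k'. k < K \<Longrightarrow> k' < K \<Longrightarrow> k \<noteq> k' \<Longrightarrow> Ns k \<inter> Ns k' = {}"
    and part_cover: "(\<Union>k<K. Ns k) = {..<N}"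
    and own_enum: "\<And>k. k < K \<Longrightarrow> distinct (own k) \<and> set (own k) = Ns k"
    and dup_enum: "\<And>k. k < K \<Longrightarrow> distinct (dup k) \<and> set (dup k) = dupset Q N Ns k"
begin

abbreviation "zsz \<equiv> lenk own dup"
abbreviation "lsz \<equiv> (\<lambda>k. length (dup k))"
abbreviation "nz \<equiv> off zsz K"
abbreviation "nl \<equiv> off lsz K"
abbreviation "n \<equiv> nz + nl"
abbreviation "L \<equiv> Lmat Q Ns K own dup"
abbreviation "R \<equiv> Rmat K own dup"

lemma PiM_carrier: "PiM own dup k k' \<in> carrier_mat (lsz k) (zsz k')"
  unfolding PiM_def lenk_def by auto

lemma Qloc_carrier: "Qloc Q Ns own dup k \<in> carrier_mat (zsz k) (zsz k)"
  unfolding Qloc_def by auto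

lemma L_carrier: "L \<in> carrier_mat n n"
  unfolding Lmat_def Let_def by (auto simp: blockmat_def)

lemma R_carrier: "R \<in> carrier_mat n n"
  unfolding Rmat_def Let_def by (auto simp: blockmat_def)

definition Wv :: "(nat \<Rightarrow> nat \<Rightarrow> real) \<Rightarrow> (nat \<Rightarrow> nat \<Rightarrow> real) \<Rightarrow> real vec" where
  "Wv zz ll = vec n (\<lambda>p. if p < nz then zz (blk zsz p) (p - off zsz (blk zsz p))
      else ll (blk lsz (p - nz)) (p - nz - off lsz (blk lsz (p - nz))))"

lemma Wv_carrier[simp]: "Wv zz ll \<in> carrier_vec n" unfolding Wv_def by simp

lemma off_lt: "k < K \<Longrightarrow> j < sz k \<Longrightarrow> off sz k + j < off sz K"
proof -
  assume a: "k < K" "j < sz k"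
  have "off sz k + j < off sz (Suc k)" using a by simp
  also have "\<dots> \<le> off sz K" using a by (intro off_mono) simp
  finally show ?thesis .
qed

lemma Wv_z[simp]: "k < K \<Longrightarrow> j < zsz k \<Longrightarrow> Wv zz ll $ (off zsz k + j) = zz k j"
  unfolding Wv_def using off_lt[where k=k and sz=zsz and j=j] by (simp add: blk_eq)

lemma Wv_l[simp]: "k < K \<Longrightarrow> r < lsz k \<Longrightarrow> Wv zz ll $ (nz + off lsz k + r) = ll k r"
  unfolding Wv_def using off_lt[where k=k and sz=lsz and j=r] by (simp add: blk_eq add.assoc)

lemma vec_eq_blocks: assumes "x \<in> carrier_vec n" "y \<in> carrier_vec n"
  and "\<And>k j. k < K \<Longrightarrow> j < zsz k \<Longrightarrow> x $ (off zsz k + j) = y $ (off zsz k + j)"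
  and "\<And>k r. k < K \<Longrightarrow> r < lsz k \<Longrightarrow> x $ (nz + off lsz k + r) = y $ (nz + off lsz k + r)"
  shows "x = y"
proof (rule eq_vecI)
  show "dim_vec x = dim_vec y" using assms by simp
  fix p assume "p < dim_vec y"
  hence p: "p < n" using assms by simp
  show "x $ p = y $ p"
  proof (cases "p < nz")
    case True
    show ?thesis by (rule block_all[OF _ True]) (use assms(3) in auto)
  next
    case False
    hence "p - nz < nl" using p by simp
    from block_all[where P="\<lambda>q. x $ (nz + q) = y $ (nz + q)", OF _ this] assms(4)
    have "x $ (nz + (p - nz)) = y $ (nz + (p - nz))" by (simp add: add.assoc)
    thus ?thesis using False by simp
  qed
qed

lemma Wv_self: assumes "x \<in> carrier_vec n"
  shows "x = Wv (\<lambda>k j. x $ (off zsz k + j)) (\<lambda>k r. x $ (nz + off lsz k + r))"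
  by (rule vec_eq_blocks) (use assms in auto)

definition "Dm = blockmat K zsz zsz (\<lambda>k k'. if k = k' then Qloc Q Ns own dup k else 0\<^sub>m (zsz k) (zsz k'))"
definition "Mm = blockmat K zsz lsz (\<lambda>k k'. if k' \<le> k then transpose_mat (PiM own dup k' k) else 0\<^sub>m (zsz k) (lsz k'))"
definition "Pm = blockmat K lsz zsz (\<lambda>k k'. if k' \<le> k then PiM own dup k k' else 0\<^sub>m (lsz k) (zsz k'))"
definition "Gm = blockmat K zsz lsz (\<lambda>k k'. if k < k' then - transpose_mat (PiM own dup k' k) else 0\<^sub>m (zsz k) (lsz k'))"
definition "Hm = blockmat K lsz zsz (\<lambda>k k'. if k < k' then - PiM own dup k k' else 0\<^sub>m (lsz k) (zsz k'))"

lemma L_eq: "L = four_block_mat Dm Mm Pm (0\<^sub>m nl nl)"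
  unfolding Lmat_def Let_def Dm_def Mm_def Pm_def ..
lemma R_eq: "R = four_block_mat (0\<^sub>m nz nz) Gm Hm (0\<^sub>m nl nl)"
  unfolding Rmat_def Let_def Gm_def Hm_def ..

lemmas bm_carr = blockmat_carrier[where K=K and rs=zsz and cs=zsz] blockmat_carrier[where K=K and rs=zsz and cs=lsz]
  blockmat_carrier[where K=K and rs=lsz and cs=zsz] blockmat_carrier[where K=K and rs=lsz and cs=lsz]

lemma blk_carr: "Dm \<in> carrier_mat nz nz" "Mm \<in> carrier_mat nz nl" "Pm \<in> carrier_mat nl nz"
  "Gm \<in> carrier_mat nz nl" "Hm \<in> carrier_mat nl nz"
  unfolding Dm_def Mm_def Pm_def Gm_def Hm_def by (rule blockmat_carrier)+

lemma L_z: assumes k: "k < K" and i: "i < zsz k"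
  shows "(L *\<^sub>v Wv zz ll) $ (off zsz k + i) = (\<Sum>j<zsz k. Qloc Q Ns own dup k $$ (i,j) * zz k j)
     + (\<Sum>k'<K. if k' \<le> k then (\<Sum>r<lsz k'. PiM own dup k' k $$ (r,i) * ll k' r) else 0)"
proof -
  let ?W = "Wv zz ll"
  have "(L *\<^sub>v ?W) $ (off zsz k + i) = (\<Sum>q<nz. Dm $$ (off zsz k + i, q) * ?W $ q) + (\<Sum>q<nl. Mm $$ (off zsz k + i, q) * ?W $ (nz + q))"
    unfolding L_eq
    by (rule four_block_rowsum(1)[OF blk_carr(1-3) zero_carrier_mat Wv_carrier off_lt[where sz=zsz, OF k i]])
  also have "(\<Sum>q<nz. Dm $$ (off zsz k + i, q) * ?W $ q) = (\<Sum>k'<K. \<Sum>j<zsz k'. (if k = k' then Qloc Q Ns own dup k else 0\<^sub>m (zsz k) (zsz k')) $$ (i, j) * ?W $ (off zsz k' + j))"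
    unfolding Dm_def by (rule blockmat_rowsum) (use k i in auto)
  also have "\<dots> = (\<Sum>k'<K. if k' = k then (\<Sum>j<zsz k. Qloc Q Ns own dup k $$ (i,j) * zz k j) else 0)"
  proof (intro sum.cong refl)
    fix k' assume k': "k' \<in> {..<K}"
    show "(\<Sum>j<zsz k'. (if k = k' then Qloc Q Ns own dup k else 0\<^sub>m (zsz k) (zsz k')) $$ (i, j) * ?W $ (off zsz k' + j))
      = (if k' = k then (\<Sum>j<zsz k. Qloc Q Ns own dup k $$ (i,j) * zz k j) else 0)"
    proof (cases "k' = k")
      case True
      show ?thesis unfolding True using k by (simp del: Wv_z) (intro sum.cong refl, simp)
    next
      case False
      have "(\<Sum>j<zsz k'. (if k = k' then Qloc Q Ns own dup k else 0\<^sub>m (zsz k) (zsz k')) $$ (i, j) * ?W $ (off zsz k' + j)) = 0"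
        using False i by (intro sum.neutral) auto
      thus ?thesis using False by simp
    qed
  qed
  also have "\<dots> = (\<Sum>j<zsz k. Qloc Q Ns own dup k $$ (i,j) * zz k j)" using k by simp
  also have "(\<Sum>q<nl. Mm $$ (off zsz k + i, q) * ?W $ (nz + q)) = (\<Sum>k'<K. \<Sum>j<lsz k'. (if k' \<le> k then transpose_mat (PiM own dup k' k) else 0\<^sub>m (zsz k) (lsz k')) $$ (i, j) * ?W $ (nz + (off lsz k' + j)))"
    unfolding Mm_def by (rule blockmat_rowsum[where g="\<lambda>q. ?W $ (nz + q)"]) (use k i in auto)
  also have "\<dots> = (\<Sum>k'<K. if k' \<le> k then (\<Sum>r<lsz k'. PiM own dup k' k $$ (r,i) * ll k' r) else 0)"
  proof (intro sum.cong refl)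
    fix k' assume k': "k' \<in> {..<K}"
    have pc: "PiM own dup k' k \<in> carrier_mat (lsz k') (zsz k)" by (rule PiM_carrier)
    show "(\<Sum>j<lsz k'. (if k' \<le> k then transpose_mat (PiM own dup k' k) else 0\<^sub>m (zsz k) (lsz k')) $$ (i, j) * ?W $ (nz + (off lsz k' + j)))
      = (if k' \<le> k then (\<Sum>r<lsz k'. PiM own dup k' k $$ (r,i) * ll k' r) else 0)"
    proof (cases "k' \<le> k")
      case True
      have "(\<Sum>j<lsz k'. transpose_mat (PiM own dup k' k) $$ (i, j) * ?W $ (nz + (off lsz k' + j))) = (\<Sum>r<lsz k'. PiM own dup k' k $$ (r,i) * ll k' r)"
        using True k' i pc by (intro sum.cong refl) (simp add: add.assoc[symmetric])
      thus ?thesis using True by simp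
    next
      case False
      have "(\<Sum>j<lsz k'. (if k' \<le> k then transpose_mat (PiM own dup k' k) else 0\<^sub>m (zsz k) (lsz k')) $$ (i, j) * ?W $ (nz + (off lsz k' + j))) = 0"
        using False i by (intro sum.neutral) auto
      thus ?thesis using False by simp
    qed
  qed
  finally show ?thesis .
qed

lemma L_l: assumes k: "k < K" and r: "r < lsz k"
  shows "(L *\<^sub>v Wv zz ll) $ (nz + off lsz k + r) =
     (\<Sum>k'<K. if k' \<le> k then (\<Sum>j<zsz k'. PiM own dup k k' $$ (r,j) * zz k' j) else 0)"
proof -
  let ?W = "Wv zz ll"
  have "(L *\<^sub>v ?W) $ (nz + (off lsz k + r)) = (\<Sum>q<nz. Pm $$ (off lsz k + r, q) * ?W $ q) + (\<Sum>q<nl. 0\<^sub>m nl nl $$ (off lsz k + r, q) * ?W $ (nz + q))"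
    unfolding L_eq
    by (rule four_block_rowsum(2)[OF blk_carr(1-3) zero_carrier_mat Wv_carrier off_lt[where sz=lsz, OF k r]])
  also have "(\<Sum>q<nl. 0\<^sub>m nl nl $$ (off lsz k + r, q) * ?W $ (nz + q)) = 0"
    using off_lt[where sz=lsz, OF k r] by (intro sum.neutral) auto
  also have "(\<Sum>q<nz. Pm $$ (off lsz k + r, q) * ?W $ q) = (\<Sum>k'<K. \<Sum>j<zsz k'. (if k' \<le> k then PiM own dup k k' else 0\<^sub>m (lsz k) (zsz k')) $$ (r, j) * ?W $ (off zsz k' + j))"
    unfolding Pm_def by (rule blockmat_rowsum) (use k r in auto)
  also have "\<dots> = (\<Sum>k'<K. if k' \<le> k then (\<Sum>j<zsz k'. PiM own dup k k' $$ (r,j) * zz k' j) else 0)"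
  proof (intro sum.cong refl)
    fix k' assume k': "k' \<in> {..<K}"
    show "(\<Sum>j<zsz k'. (if k' \<le> k then PiM own dup k k' else 0\<^sub>m (lsz k) (zsz k')) $$ (r, j) * ?W $ (off zsz k' + j))
      = (if k' \<le> k then (\<Sum>j<zsz k'. PiM own dup k k' $$ (r,j) * zz k' j) else 0)"
    proof (cases "k' \<le> k")
      case True
      have "(\<Sum>j<zsz k'. PiM own dup k k' $$ (r, j) * ?W $ (off zsz k' + j)) = (\<Sum>j<zsz k'. PiM own dup k k' $$ (r,j) * zz k' j)"
        using k' by (intro sum.cong refl) simp
      thus ?thesis using True by simp
    next
      case False
      have "(\<Sum>j<zsz k'. (if k' \<le> k then PiM own dup k k' else 0\<^sub>m (lsz k) (zsz k')) $$ (r, j) * ?W $ (off zsz k' + j)) = 0"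
        using False r by (intro sum.neutral) auto
      thus ?thesis using False by simp
    qed
  qed
  finally show ?thesis by (simp add: add.assoc)
qed

lemma R_z: assumes k: "k < K" and i: "i < zsz k"
  shows "(R *\<^sub>v Wv zz ll) $ (off zsz k + i) =
     (\<Sum>k'<K. if k < k' then - (\<Sum>r<lsz k'. PiM own dup k' k $$ (r,i) * ll k' r) else 0)"
proof -
  let ?W = "Wv zz ll"
  have "(R *\<^sub>v ?W) $ (off zsz k + i) = (\<Sum>q<nz. 0\<^sub>m nz nz $$ (off zsz k + i, q) * ?W $ q) + (\<Sum>q<nl. Gm $$ (off zsz k + i, q) * ?W $ (nz + q))"
    unfolding R_eq
    by (rule four_block_rowsum(1)[OF zero_carrier_mat blk_carr(4-5) zero_carrier_mat Wv_carrier off_lt[where sz=zsz, OF k i]])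
  also have "(\<Sum>q<nz. 0\<^sub>m nz nz $$ (off zsz k + i, q) * ?W $ q) = 0"
    using off_lt[where sz=zsz, OF k i] by (intro sum.neutral) auto
  also have "(\<Sum>q<nl. Gm $$ (off zsz k + i, q) * ?W $ (nz + q)) = (\<Sum>k'<K. \<Sum>j<lsz k'. (if k < k' then - transpose_mat (PiM own dup k' k) else 0\<^sub>m (zsz k) (lsz k')) $$ (i, j) * ?W $ (nz + (off lsz k' + j)))"
    unfolding Gm_def by (rule blockmat_rowsum[where g="\<lambda>q. ?W $ (nz + q)"]) (use k i in auto)
  also have "\<dots> = (\<Sum>k'<K. if k < k' then - (\<Sum>r<lsz k'. PiM own dup k' k $$ (r,i) * ll k' r) else 0)"
  proof (intro sum.cong refl)
    fix k' assume k': "k' \<in> {..<K}"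
    have pc: "PiM own dup k' k \<in> carrier_mat (lsz k') (zsz k)" by (rule PiM_carrier)
    show "(\<Sum>j<lsz k'. (if k < k' then - transpose_mat (PiM own dup k' k) else 0\<^sub>m (zsz k) (lsz k')) $$ (i, j) * ?W $ (nz + (off lsz k' + j)))
      = (if k < k' then - (\<Sum>r<lsz k'. PiM own dup k' k $$ (r,i) * ll k' r) else 0)"
    proof (cases "k < k'")
      case True
      have "(\<Sum>j<lsz k'. (- transpose_mat (PiM own dup k' k)) $$ (i, j) * ?W $ (nz + (off lsz k' + j))) = (\<Sum>r<lsz k'. - (PiM own dup k' k $$ (r,i) * ll k' r))"
        using True k' i pc by (intro sum.cong refl) (simp add: add.assoc[symmetric])
      thus ?thesis using True by (simp add: sum_negf)
    next
      case False
      have "(\<Sum>j<lsz k'. (if k < k' then - transpose_mat (PiM own dup k' k) else 0\<^sub>m (zsz k) (lsz k')) $$ (i, j) * ?W $ (nz + (off lsz k' + j))) = 0"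
        using False i by (intro sum.neutral) auto
      thus ?thesis using False by simp
    qed
  qed
  finally show ?thesis by simp
qed

lemma R_l: assumes k: "k < K" and r: "r < lsz k"
  shows "(R *\<^sub>v Wv zz ll) $ (nz + off lsz k + r) =
     (\<Sum>k'<K. if k < k' then - (\<Sum>j<zsz k'. PiM own dup k k' $$ (r,j) * zz k' j) else 0)"
proof -
  let ?W = "Wv zz ll"
  have "(R *\<^sub>v ?W) $ (nz + (off lsz k + r)) = (\<Sum>q<nz. Hm $$ (off lsz k + r, q) * ?W $ q) + (\<Sum>q<nl. 0\<^sub>m nl nl $$ (off lsz k + r, q) * ?W $ (nz + q))"
    unfolding R_eq
    by (rule four_block_rowsum(2)[OF zero_carrier_mat blk_carr(4-5) zero_carrier_mat Wv_carrier off_lt[where sz=lsz, OF k r]])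
  also have "(\<Sum>q<nl. 0\<^sub>m nl nl $$ (off lsz k + r, q) * ?W $ (nz + q)) = 0"
    using off_lt[where sz=lsz, OF k r] by (intro sum.neutral) auto
  also have "(\<Sum>q<nz. Hm $$ (off lsz k + r, q) * ?W $ q) = (\<Sum>k'<K. \<Sum>j<zsz k'. (if k < k' then - PiM own dup k k' else 0\<^sub>m (lsz k) (zsz k')) $$ (r, j) * ?W $ (off zsz k' + j))"
    unfolding Hm_def by (rule blockmat_rowsum) (use k r in auto)
  also have "\<dots> = (\<Sum>k'<K. if k < k' then - (\<Sum>j<zsz k'. PiM own dup k k' $$ (r,j) * zz k' j) else 0)"
  proof (intro sum.cong refl)
    fix k' assume k': "k' \<in> {..<K}"
    have pc: "PiM own dup k k' \<in> carrier_mat (lsz k) (zsz k')" by (rule PiM_carrier)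
    show "(\<Sum>j<zsz k'. (if k < k' then - PiM own dup k k' else 0\<^sub>m (lsz k) (zsz k')) $$ (r, j) * ?W $ (off zsz k' + j))
      = (if k < k' then - (\<Sum>j<zsz k'. PiM own dup k k' $$ (r,j) * zz k' j) else 0)"
    proof (cases "k < k'")
      case True
      have "(\<Sum>j<zsz k'. (- PiM own dup k k') $$ (r, j) * ?W $ (off zsz k' + j)) = (\<Sum>j<zsz k'. - (PiM own dup k k' $$ (r,j) * zz k' j))"
        using k' r pc by (intro sum.cong refl) simp
      thus ?thesis using True by (simp add: sum_negf)
    next
      case False
      have "(\<Sum>j<zsz k'. (if k < k' then - PiM own dup k k' else 0\<^sub>m (lsz k) (zsz k')) $$ (r, j) * ?W $ (off zsz k' + j)) = 0"
        using False r by (intro sum.neutral) auto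
      thus ?thesis using False by simp
    qed
  qed
  finally show ?thesis by (simp add: add.assoc)
qed

lemma sum_split_le_gt: "(\<Sum>k'<K. F k') = (\<Sum>k'<K. if k' \<le> k then F k' else 0) + (\<Sum>k'<K. if k < k' then F k' else (0::real))"
  by (subst sum.distrib[symmetric]) (intro sum.cong refl, auto)

lemma GS_step:
  assumes GS_z: "\<And>k i. k < K \<Longrightarrow> i < lenk own dup k \<Longrightarrow>
        (\<Sum>j<lenk own dup k. Qloc Q Ns own dup k $$ (i, j) * zs1 k j)
        + (\<Sum>r<length (dup k). PiM own dup k k $$ (r, i) * lams1 k r)
        = cloc c Ns own dup k $ i
          - (\<Sum>k'<k. \<Sum>r<length (dup k'). PiM own dup k' k $$ (r, i) * lams1 k' r)
          - (\<Sum>k'\<in>{k<..<K}. \<Sum>r<length (dup k'). PiM own dup k' k $$ (r, i) * lams0 k' r)"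
    and GS_lam: "\<And>k r. k < K \<Longrightarrow> r < length (dup k) \<Longrightarrow>
        (\<Sum>j<lenk own dup k. PiM own dup k k $$ (r, j) * zs1 k j)
        = - (\<Sum>k'<k. \<Sum>j<lenk own dup k'. PiM own dup k k' $$ (r, j) * zs1 k' j)
          - (\<Sum>k'\<in>{k<..<K}. \<Sum>j<lenk own dup k'. PiM own dup k k' $$ (r, j) * zs0 k' j)"
  shows "L *\<^sub>v Wv zs1 lams1 = Wv (\<lambda>k i. cloc c Ns own dup k $ i) (\<lambda>k r. 0) + R *\<^sub>v Wv zs0 lams0"
proof (rule vec_eq_blocks)
  show "L *\<^sub>v Wv zs1 lams1 \<in> carrier_vec n" using L_carrier by simp
  show "Wv (\<lambda>k i. cloc c Ns own dup k $ i) (\<lambda>k r. 0) + R *\<^sub>v Wv zs0 lams0 \<in> carrier_vec n" using R_carrier by simp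
next
  fix k j assume k: "k < K" and j: "j < zsz k"
  have lt: "off zsz k + j < n" using off_lt[where sz=zsz, OF k j] by simp
  show "(L *\<^sub>v Wv zs1 lams1) $ (off zsz k + j) = (Wv (\<lambda>k i. cloc c Ns own dup k $ i) (\<lambda>k r. 0) + R *\<^sub>v Wv zs0 lams0) $ (off zsz k + j)"
  proof -
    have e1: "(Wv (\<lambda>k i. cloc c Ns own dup k $ i) (\<lambda>k r. 0) + R *\<^sub>v Wv zs0 lams0) $ (off zsz k + j)
      = Wv (\<lambda>k i. cloc c Ns own dup k $ i) (\<lambda>k r. 0) $ (off zsz k + j) + (R *\<^sub>v Wv zs0 lams0) $ (off zsz k + j)"
      using lt R_carrier by (intro index_add_vec(1)) auto
    show ?thesis unfolding e1 L_z[OF k j] R_z[OF k j] Wv_z[OF k j] sum_if_le[OF k] sum_if_gt sum_negf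
      using GS_z[OF k j] by linarith
  qed
next
  fix k r assume k: "k < K" and r: "r < lsz k"
  have lt: "nz + off lsz k + r < n" using off_lt[where sz=lsz, OF k r] by simp
  show "(L *\<^sub>v Wv zs1 lams1) $ (nz + off lsz k + r) = (Wv (\<lambda>k i. cloc c Ns own dup k $ i) (\<lambda>k r. 0) + R *\<^sub>v Wv zs0 lams0) $ (nz + off lsz k + r)"
  proof -
    have e1: "(Wv (\<lambda>k i. cloc c Ns own dup k $ i) (\<lambda>k r. 0) + R *\<^sub>v Wv zs0 lams0) $ (nz + off lsz k + r)
      = Wv (\<lambda>k i. cloc c Ns own dup k $ i) (\<lambda>k r. 0) $ (nz + off lsz k + r) + (R *\<^sub>v Wv zs0 lams0) $ (nz + off lsz k + r)"
      using lt R_carrier by (intro index_add_vec(1)) auto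
    show ?thesis unfolding e1 L_l[OF k r] R_l[OF k r] Wv_l[OF k r] sum_if_le[OF k] sum_if_gt sum_negf
      using GS_lam[OF k r] by linarith
  qed
qed

end


context gs_setup begin
lemma sum_distinct_nth: "distinct xs \<Longrightarrow> (\<Sum>j<length xs. F (xs ! j)) = (\<Sum>x\<in>set xs. F x)"
  by (simp add: sum.distinct_set_conv_list sum_list_sum_nth atLeast0LessThan)

lemma Ns_sub: "k < K \<Longrightarrow> Ns k \<subseteq> {..<N}"
  using part_cover by auto

lemma Ns_fin[simp]: "k < K \<Longrightarrow> finite (Ns k)"
  using Ns_sub finite_subset by blast

lemma dupset_iff: "b \<in> dupset Q N Ns k \<longleftrightarrow> b < N \<and> b \<notin> Ns k \<and> (\<exists>i\<in>Ns k. Q $$ (i, b) \<noteq> 0)"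
  unfolding dupset_def by auto

lemma dupset_fin[simp]: "finite (dupset Q N Ns k)"
  by (rule finite_subset[of _ "{..<N}"]) (auto simp: dupset_iff)

lemma part_ex: "a < N \<Longrightarrow> \<exists>k0<K. a \<in> Ns k0"
  using part_cover by auto

lemma part_uniq: "k < K \<Longrightarrow> k' < K \<Longrightarrow> a \<in> Ns k \<Longrightarrow> a \<in> Ns k' \<Longrightarrow> k = k'"
  using part_disj by blast

lemma Qs: "a < N \<Longrightarrow> b < N \<Longrightarrow> Q $$ (a, b) = Q $$ (b, a)"
proof -
  assume "a < N" "b < N"
  hence "transpose_mat Q $$ (a, b) = Q $$ (b, a)" using Qdim by simp
  thus ?thesis using Qsym by simp
qed

abbreviation "ol k \<equiv> length (own k)"

lemma zsz_eq: "zsz k = ol k + lsz k" unfolding lenk_def ..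

lemma nbar_own[simp]: "j < ol k \<Longrightarrow> nbar own dup k ! j = own k ! j"
  unfolding nbar_def by (simp add: nth_append)

lemma nbar_dup[simp]: "nbar own dup k ! (ol k + r) = dup k ! r"
  unfolding nbar_def by (simp add: nth_append)

lemma nbar_props: assumes "k < K"
  shows "distinct (nbar own dup k)" "set (nbar own dup k) = Ns k \<union> dupset Q N Ns k" "length (nbar own dup k) = zsz k"
  using own_enum[OF assms] dup_enum[OF assms] unfolding nbar_def lenk_def by (auto simp: dupset_iff)

lemma sum_nbar: "k < K \<Longrightarrow> (\<Sum>j<zsz k. F (nbar own dup k ! j)) = (\<Sum>x\<in>Ns k \<union> dupset Q N Ns k. F x)"
  using sum_distinct_nth[OF nbar_props(1), of k F] nbar_props(2,3)[of k] by simp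

lemma sum_own: "k < K \<Longrightarrow> (\<Sum>j<ol k. F (own k ! j)) = (\<Sum>x\<in>Ns k. F x)"
  using sum_distinct_nth[of "own k" F] own_enum[of k] by simp

lemma sum_dup: "k < K \<Longrightarrow> (\<Sum>j<lsz k. F (dup k ! j)) = (\<Sum>x\<in>dupset Q N Ns k. F x)"
  using sum_distinct_nth[of "dup k" F] dup_enum[of k] by simp

lemma PiM_diag: "r < lsz k \<Longrightarrow> j < zsz k \<Longrightarrow> PiM own dup k k $$ (r, j) = (if j = ol k + r then 1 else 0)"
  unfolding PiM_def by simp

lemma PiM_off: "k \<noteq> k' \<Longrightarrow> r < lsz k \<Longrightarrow> j < zsz k' \<Longrightarrow> PiM own dup k k' $$ (r, j) = (if j < ol k' \<and> own k' ! j = dup k ! r then -1 else 0)"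
  unfolding PiM_def by simp

lemma Qloc_idx: "i < zsz k \<Longrightarrow> j < zsz k \<Longrightarrow> Qloc Q Ns own dup k $$ (i, j) =
   (let a = nbar own dup k ! i; b = nbar own dup k ! j in
     if a \<in> Ns k \<and> b \<in> Ns k then Q $$ (a, b)
     else if a \<in> Ns k \<or> b \<in> Ns k then Q $$ (a, b) / 2 else 0)"
  unfolding Qloc_def by simp

lemma C2: assumes k: "k < K" and r: "r < lsz k"
  shows "(\<Sum>k'<K. \<Sum>j<zsz k'. PiM own dup k k' $$ (r,j) * zstar $ (nbar own dup k' ! j)) = 0"
proof -
  define a where "a = dup k ! r"
  have "a \<in> set (dup k)" unfolding a_def using r by simp
  hence "a \<in> dupset Q N Ns k" using dup_enum[OF k] by simp
  hence aN: "a < N" and ak: "a \<notin> Ns k" unfolding dupset_iff by simp_all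
  obtain k0 where k0: "k0 < K" "a \<in> Ns k0" using part_ex[OF aN] by auto
  have k0k: "k0 \<noteq> k" using k0 ak by blast
  have inner: "(\<Sum>j<zsz k'. PiM own dup k k' $$ (r,j) * zstar $ (nbar own dup k' ! j))
     = (if k' = k then zstar $ a else 0) + (if k' = k0 then - zstar $ a else 0)" if k': "k' < K" for k'
  proof (cases "k' = k")
    case True
    have "(\<Sum>j<zsz k'. PiM own dup k k' $$ (r,j) * zstar $ (nbar own dup k' ! j))
       = (\<Sum>j<zsz k. if j = ol k + r then zstar $ (nbar own dup k ! j) else 0)"
      unfolding True by (rule sum.cong[OF refl]) (simp add: PiM_diag[OF r])
    also have "\<dots> = zstar $ (nbar own dup k ! (ol k + r))" using r by (simp add: zsz_eq)
    also have "\<dots> = zstar $ a" unfolding a_def by (rule arg_cong[where f="\<lambda>i. zstar $ i"], rule nbar_dup)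
    finally show ?thesis using True k0k by simp
  next
    case False
    have "(\<Sum>j<zsz k'. PiM own dup k k' $$ (r,j) * zstar $ (nbar own dup k' ! j))
       = (\<Sum>j<zsz k'. if j < ol k' \<and> own k' ! j = a then - zstar $ (nbar own dup k' ! j) else 0)"
      unfolding a_def by (rule sum.cong[OF refl]) (use False in \<open>simp add: PiM_off[OF _ r]\<close>)
    also have "\<dots> = (\<Sum>j<ol k'. if own k' ! j = a then - zstar $ (own k' ! j) else 0)"
      unfolding zsz_eq sum_lt_add by (simp del: nbar_own, rule sum.cong[OF refl], simp)
    also have "\<dots> = (\<Sum>x\<in>Ns k'. if x = a then - zstar $ x else 0)"
      by (rule sum_own[OF k'])
    also have "\<dots> = (if a \<in> Ns k' then - zstar $ a else 0)" using k' by (simp add: sum.delta')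
    also have "\<dots> = (if k' = k0 then - zstar $ a else 0)"
    proof -
      have "a \<in> Ns k' \<longleftrightarrow> k' = k0" using k0 k' part_uniq[of k' k0 a] by blast
      thus ?thesis by simp
    qed
    finally show ?thesis using False by simp
  qed
  have "(\<Sum>k'<K. \<Sum>j<zsz k'. PiM own dup k k' $$ (r,j) * zstar $ (nbar own dup k' ! j))
    = (\<Sum>k'<K. (if k' = k then zstar $ a else 0) + (if k' = k0 then - zstar $ a else 0))"
    by (rule sum.cong[OF refl], rule inner) simp
  also have "\<dots> = 0" using k k0 by (simp add: sum.distrib)
  finally show ?thesis .
qed
lemma sum_part: "(\<Sum>b<N. g b) = (\<Sum>k'<K. \<Sum>b\<in>Ns k'. (g b :: real))"
proof -
  have "{..<N} = (\<Union>k'\<in>{..<K}. Ns k')" using part_cover by simp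
  hence "(\<Sum>b<N. g b) = sum g (\<Union>k'\<in>{..<K}. Ns k')" by simp
  also have "\<dots> = (\<Sum>k'<K. sum g (Ns k'))"
    by (rule sum.UNION_disjoint) (use part_disj in auto)
  finally show ?thesis .
qed

lemma Q_zero_out: assumes "a \<in> Ns k" "k < K" "b < N" "b \<notin> Ns k" "b \<notin> dupset Q N Ns k"
  shows "Q $$ (a, b) = 0"
  using assms unfolding dupset_iff by blast

definition lamof :: "real vec \<Rightarrow> nat \<Rightarrow> nat \<Rightarrow> real" where
  "lamof zstar k a = - (1/2) * (\<Sum>b\<in>Ns k. Q $$ (a, b) * zstar $ b)"

lemma C1_dup: assumes k: "k < K" and r0: "r0 < lsz k"
  shows "(\<Sum>j<zsz k. Qloc Q Ns own dup k $$ (ol k + r0, j) * zstar $ (nbar own dup k ! j))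
    + (\<Sum>k'<K. \<Sum>r<lsz k'. PiM own dup k' k $$ (r, ol k + r0) * lamof zstar k' (dup k' ! r)) = cloc c Ns own dup k $ (ol k + r0)"
proof -
  define a where "a = dup k ! r0"
  have "a \<in> set (dup k)" unfolding a_def using r0 by simp
  hence "a \<in> dupset Q N Ns k" using dup_enum[OF k] by simp
  hence aN: "a < N" and ak: "a \<notin> Ns k" unfolding dupset_iff by simp_all
  have i: "ol k + r0 < zsz k" using r0 by (simp add: zsz_eq)
  have "(\<Sum>j<zsz k. Qloc Q Ns own dup k $$ (ol k + r0, j) * zstar $ (nbar own dup k ! j))
     = (\<Sum>j<zsz k. (\<lambda>x. if x \<in> Ns k then Q $$ (a, x) / 2 * zstar $ x else 0) (nbar own dup k ! j))"
    by (rule sum.cong[OF refl]) (use i ak in \<open>simp add: Qloc_idx a_def[symmetric] Let_def\<close>)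
  also have "\<dots> = (\<Sum>x\<in>Ns k \<union> dupset Q N Ns k. if x \<in> Ns k then Q $$ (a, x) / 2 * zstar $ x else 0)"
    by (rule sum_nbar[OF k])
  also have "\<dots> = (\<Sum>x\<in>Ns k. Q $$ (a, x) / 2 * zstar $ x)"
    by (rule sum.mono_neutral_cong_right) (use k in auto)
  also have "(\<Sum>x\<in>Ns k. Q $$ (a, x) / 2 * zstar $ x) = - lamof zstar k a"
    unfolding lamof_def by (simp add: sum_divide_distrib[symmetric])
  finally have 1: "(\<Sum>j<zsz k. Qloc Q Ns own dup k $$ (ol k + r0, j) * zstar $ (nbar own dup k ! j)) = - lamof zstar k a" .
  have "(\<Sum>k'<K. \<Sum>r<lsz k'. PiM own dup k' k $$ (r, ol k + r0) * lamof zstar k' (dup k' ! r))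
    = (\<Sum>k'<K. if k' = k then lamof zstar k a else 0)"
  proof (rule sum.cong[OF refl])
    fix k' assume k': "k' \<in> {..<K}"
    show "(\<Sum>r<lsz k'. PiM own dup k' k $$ (r, ol k + r0) * lamof zstar k' (dup k' ! r)) = (if k' = k then lamof zstar k a else 0)"
    proof (cases "k' = k")
      case True
      have "(\<Sum>r<lsz k'. PiM own dup k' k $$ (r, ol k + r0) * lamof zstar k' (dup k' ! r))
        = (\<Sum>r<lsz k. if r = r0 then lamof zstar k (dup k ! r) else 0)"
        unfolding True by (rule sum.cong[OF refl]) (simp add: PiM_diag[OF _ i])
      also have "\<dots> = lamof zstar k a" using r0 unfolding a_def by simp
      finally show ?thesis using True by simp
    next
      case False
      have "(\<Sum>r<lsz k'. PiM own dup k' k $$ (r, ol k + r0) * lamof zstar k' (dup k' ! r)) = 0"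
        by (rule sum.neutral) (use False i in \<open>simp add: PiM_off\<close>)
      thus ?thesis using False by simp
    qed
  qed
  also have "\<dots> = lamof zstar k a" using k by simp
  finally have 2: "(\<Sum>k'<K. \<Sum>r<lsz k'. PiM own dup k' k $$ (r, ol k + r0) * lamof zstar k' (dup k' ! r)) = lamof zstar k a" .
  have 3: "cloc c Ns own dup k $ (ol k + r0) = 0"
    unfolding cloc_def using i ak by (simp add: a_def[symmetric])
  show ?thesis unfolding 1 2 3 by simp
qed
lemma sum_if_mem: "finite A \<Longrightarrow> S \<subseteq> A \<Longrightarrow> (\<Sum>b\<in>A. if b \<in> S then f b else 0) = sum f S"
  using sum.inter_restrict[where A=A and g=f and B=S] by (simp add: Int_absorb1)

lemma C1_own: assumes k: "k < K" and i0: "i < ol k"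
  and grad: "(\<Sum>b<N. Q $$ (own k ! i, b) * zstar $ b) = c $ (own k ! i)"
  shows "(\<Sum>j<zsz k. Qloc Q Ns own dup k $$ (i, j) * zstar $ (nbar own dup k ! j))
    + (\<Sum>k'<K. \<Sum>r<lsz k'. PiM own dup k' k $$ (r, i) * lamof zstar k' (dup k' ! r)) = cloc c Ns own dup k $ i"
proof -
  define a where "a = own k ! i"
  have "a \<in> set (own k)" unfolding a_def using i0 by simp
  hence ak: "a \<in> Ns k" using own_enum[OF k] by simp
  have aN: "a < N" using ak Ns_sub[OF k] by blast
  have i: "i < zsz k" using i0 by (simp add: zsz_eq)
  define T where "T x = Q $$ (a, x) * zstar $ x" for x
  define h where "h x = (if x \<in> Ns k then T x else T x / 2)" for x
  have "(\<Sum>j<zsz k. Qloc Q Ns own dup k $$ (i, j) * zstar $ (nbar own dup k ! j))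
     = (\<Sum>j<zsz k. h (nbar own dup k ! j))"
  proof (rule sum.cong[OF refl])
    fix j assume "j \<in> {..<zsz k}"
    hence j: "j < zsz k" by simp
    have na: "nbar own dup k ! i = a" using i0 unfolding a_def by simp
    show "Qloc Q Ns own dup k $$ (i, j) * zstar $ (nbar own dup k ! j) = h (nbar own dup k ! j)"
      unfolding Qloc_idx[OF i j] Let_def na h_def T_def using ak by simp
  qed
  also have "\<dots> = (\<Sum>x\<in>Ns k \<union> dupset Q N Ns k. h x)"
    by (rule sum_nbar[OF k])
  also have "\<dots> = (\<Sum>b<N. if b \<in> Ns k \<union> dupset Q N Ns k then h b else 0)"
  proof (rule sum_if_mem[symmetric])
    show "Ns k \<union> dupset Q N Ns k \<subseteq> {..<N}" using Ns_sub[OF k] by (auto simp: dupset_iff)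
  qed simp
  also have "\<dots> = (\<Sum>k'<K. \<Sum>b\<in>Ns k'. if b \<in> Ns k \<union> dupset Q N Ns k then h b else 0)"
    by (rule sum_part)
  finally have 1: "(\<Sum>j<zsz k. Qloc Q Ns own dup k $$ (i, j) * zstar $ (nbar own dup k ! j))
     = (\<Sum>k'<K. \<Sum>b\<in>Ns k'. if b \<in> Ns k \<union> dupset Q N Ns k then h b else 0)" .
  have 2: "(\<Sum>k'<K. \<Sum>r<lsz k'. PiM own dup k' k $$ (r, i) * lamof zstar k' (dup k' ! r))
    = (\<Sum>k'<K. if k' \<noteq> k \<and> a \<in> dupset Q N Ns k' then (\<Sum>b\<in>Ns k'. T b / 2) else 0)"
  proof (rule sum.cong[OF refl])
    fix k' assume k'K: "k' \<in> {..<K}"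
    hence k': "k' < K" by simp
    show "(\<Sum>r<lsz k'. PiM own dup k' k $$ (r, i) * lamof zstar k' (dup k' ! r))
       = (if k' \<noteq> k \<and> a \<in> dupset Q N Ns k' then (\<Sum>b\<in>Ns k'. T b / 2) else 0)"
    proof (cases "k' = k")
      case True
      have "(\<Sum>r<lsz k'. PiM own dup k' k $$ (r, i) * lamof zstar k' (dup k' ! r)) = 0"
        by (rule sum.neutral) (use True i i0 in \<open>simp add: PiM_diag\<close>)
      thus ?thesis using True by simp
    next
      case False
      have "(\<Sum>r<lsz k'. PiM own dup k' k $$ (r, i) * lamof zstar k' (dup k' ! r))
        = (\<Sum>r<lsz k'. (\<lambda>x. if x = a then - lamof zstar k' x else 0) (dup k' ! r))"
      proof (rule sum.cong[OF refl])
        fix r assume "r \<in> {..<lsz k'}"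
        hence r: "r < lsz k'" by simp
        have "PiM own dup k' k $$ (r, i) = (if own k ! i = dup k' ! r then -1 else 0)"
          using PiM_off[OF _ r i] False i0 by simp
        thus "PiM own dup k' k $$ (r, i) * lamof zstar k' (dup k' ! r) = (\<lambda>x. if x = a then - lamof zstar k' x else 0) (dup k' ! r)"
          unfolding a_def by (cases "dup k' ! r = own k ! i") auto
      qed
      also have "\<dots> = (\<Sum>x\<in>dupset Q N Ns k'. if x = a then - lamof zstar k' x else 0)"
        by (rule sum_dup[OF k'])
      also have "\<dots> = (if a \<in> dupset Q N Ns k' then - lamof zstar k' a else 0)"
        by (simp add: sum.delta')
      also have "- lamof zstar k' a = (\<Sum>b\<in>Ns k'. T b / 2)"
        unfolding lamof_def T_def by (simp add: sum_divide_distrib[symmetric])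
      finally show ?thesis using False by simp
    qed
  qed
  have 3: "cloc c Ns own dup k $ i = (\<Sum>k'<K. \<Sum>b\<in>Ns k'. T b)"
  proof -
    have na: "nbar own dup k ! i = a" using i0 unfolding a_def by simp
    have "cloc c Ns own dup k $ i = c $ a" unfolding cloc_def using i na ak by simp
    also have "\<dots> = (\<Sum>b<N. T b)" unfolding T_def using grad unfolding a_def by simp
    also have "\<dots> = (\<Sum>k'<K. \<Sum>b\<in>Ns k'. T b)" by (rule sum_part)
    finally show ?thesis .
  qed
  have 4: "(\<Sum>b\<in>Ns k'. if b \<in> Ns k \<union> dupset Q N Ns k then h b else 0)
      + (if k' \<noteq> k \<and> a \<in> dupset Q N Ns k' then (\<Sum>b\<in>Ns k'. T b / 2) else 0) = (\<Sum>b\<in>Ns k'. T b)"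
    if k': "k' < K" for k'
  proof (cases "k' = k")
    case True
    have "(\<Sum>b\<in>Ns k. if b \<in> Ns k \<union> dupset Q N Ns k then h b else 0) = (\<Sum>b\<in>Ns k. T b)"
      by (rule sum.cong[OF refl]) (simp add: h_def)
    thus ?thesis unfolding True by simp
  next
    case False
    have dis: "b \<notin> Ns k" if "b \<in> Ns k'" for b using part_disj[OF k k'] False that by blast
    have bN: "b < N" if "b \<in> Ns k'" for b using Ns_sub[OF k'] that by blast
    show ?thesis
    proof (cases "a \<in> dupset Q N Ns k'")
      case True
      have "(\<Sum>b\<in>Ns k'. if b \<in> Ns k \<union> dupset Q N Ns k then h b else 0) = (\<Sum>b\<in>Ns k'. T b / 2)"
      proof (rule sum.cong[OF refl])
        fix b assume b: "b \<in> Ns k'"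
        note d = dis[OF b]
        show "(if b \<in> Ns k \<union> dupset Q N Ns k then h b else 0) = T b / 2"
        proof (cases "b \<in> dupset Q N Ns k")
          case True thus ?thesis unfolding h_def using d by simp
        next
          case False
          have "Q $$ (a, b) = 0" by (rule Q_zero_out[OF ak k bN[OF b] d False])
          thus ?thesis unfolding h_def T_def using d False by simp
        qed
      qed
      hence "(\<Sum>b\<in>Ns k'. if b \<in> Ns k \<union> dupset Q N Ns k then h b else 0)
          + (if k' \<noteq> k \<and> a \<in> dupset Q N Ns k' then (\<Sum>b\<in>Ns k'. T b / 2) else 0) = (\<Sum>b\<in>Ns k'. T b / 2) + (\<Sum>b\<in>Ns k'. T b / 2)"
        using True False by simp
      also have "\<dots> = (\<Sum>b\<in>Ns k'. T b)" by (simp add: sum.distrib[symmetric])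
      finally show ?thesis .
    next
      case nd: False
      have z: "T b = 0" if b: "b \<in> Ns k'" for b
      proof -
        have "a \<notin> Ns k'" using dis ak by blast
        hence "Q $$ (b, a) = 0" using nd aN b unfolding dupset_iff by blast
        thus ?thesis unfolding T_def using Qs[OF aN bN[OF b]] by simp
      qed
      have "(\<Sum>b\<in>Ns k'. if b \<in> Ns k \<union> dupset Q N Ns k then h b else 0) = 0"
        by (rule sum.neutral) (simp add: h_def z)
      moreover have "(\<Sum>b\<in>Ns k'. T b) = 0" by (rule sum.neutral) (simp add: z)
      ultimately show ?thesis using nd by simp
    qed
  qed
  show ?thesis unfolding 1 2 3 sum.distrib[symmetric]
  proof (rule sum.cong[OF refl])
    fix k' assume "k' \<in> {..<K}"
    thus "(\<Sum>b\<in>Ns k'. if b \<in> Ns k \<union> dupset Q N Ns k then h b else 0)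
      + (if k' \<noteq> k \<and> a \<in> dupset Q N Ns k' then (\<Sum>b\<in>Ns k'. T b / 2) else 0) = (\<Sum>b\<in>Ns k'. T b)"
      using 4 by simp
  qed
qed
lemma C1: assumes k: "k < K" and i: "i < zsz k"
  and grad: "\<And>a. a < N \<Longrightarrow> (\<Sum>b<N. Q $$ (a, b) * zstar $ b) = c $ a"
  shows "(\<Sum>j<zsz k. Qloc Q Ns own dup k $$ (i, j) * zstar $ (nbar own dup k ! j))
    + (\<Sum>k'<K. \<Sum>r<lsz k'. PiM own dup k' k $$ (r, i) * lamof zstar k' (dup k' ! r)) = cloc c Ns own dup k $ i"
proof (cases "i < ol k")
  case True
  have "own k ! i \<in> set (own k)" using True by simp
  hence "own k ! i \<in> Ns k" using own_enum[OF k] by simp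
  hence "own k ! i < N" using Ns_sub[OF k] by blast
  from C1_own[OF k True grad[OF this]] show ?thesis .
next
  case False
  define r0 where "r0 = i - ol k"
  have i_eq: "i = ol k + r0" using False unfolding r0_def by simp
  have r0: "r0 < lsz k" using i unfolding i_eq zsz_eq by simp
  show ?thesis unfolding i_eq by (rule C1_dup[OF k r0])
qed

definition "Wstar zstar = Wv (\<lambda>k j. zstar $ (nbar own dup k ! j)) (\<lambda>k r. lamof zstar k (dup k ! r))"
definition "bvec = Wv (\<lambda>k i. cloc c Ns own dup k $ i) (\<lambda>k r. 0)"

lemma Star: assumes grad: "\<And>a. a < N \<Longrightarrow> (\<Sum>b<N. Q $$ (a, b) * zstar $ b) = c $ a"
  shows "L *\<^sub>v Wstar zstar = bvec + R *\<^sub>v Wstar zstar"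
  unfolding Wstar_def bvec_def
proof (rule vec_eq_blocks)
  let ?W = "Wv (\<lambda>k j. zstar $ (nbar own dup k ! j)) (\<lambda>k r. lamof zstar k (dup k ! r))"
  let ?b = "Wv (\<lambda>k i. cloc c Ns own dup k $ i) (\<lambda>k r. 0)"
  show "L *\<^sub>v ?W \<in> carrier_vec n" using L_carrier by simp
  show "?b + R *\<^sub>v ?W \<in> carrier_vec n" using R_carrier by simp
next
  let ?W = "Wv (\<lambda>k j. zstar $ (nbar own dup k ! j)) (\<lambda>k r. lamof zstar k (dup k ! r))"
  let ?b = "Wv (\<lambda>k i. cloc c Ns own dup k $ i) (\<lambda>k r. 0)"
  fix k j assume k: "k < K" and j: "j < zsz k"
  have lt: "off zsz k + j < n" using off_lt[where sz=zsz, OF k j] by simp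
  have e1: "(?b + R *\<^sub>v ?W) $ (off zsz k + j) = ?b $ (off zsz k + j) + (R *\<^sub>v ?W) $ (off zsz k + j)"
    using lt R_carrier by (intro index_add_vec(1)) auto
  show "(L *\<^sub>v ?W) $ (off zsz k + j) = (?b + R *\<^sub>v ?W) $ (off zsz k + j)"
    unfolding e1 L_z[OF k j] R_z[OF k j] Wv_z[OF k j]
    using C1[OF k j, of zstar] grad sum_split_le_gt[of "\<lambda>k'. \<Sum>r<lsz k'. PiM own dup k' k $$ (r, j) * lamof zstar k' (dup k' ! r)" k]
    by (simp only: sum_if_gt sum_negf) (simp add: algebra_simps)
next
  let ?W = "Wv (\<lambda>k j. zstar $ (nbar own dup k ! j)) (\<lambda>k r. lamof zstar k (dup k ! r))"
  let ?b = "Wv (\<lambda>k i. cloc c Ns own dup k $ i) (\<lambda>k r. 0)"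
  fix k r assume k: "k < K" and r: "r < lsz k"
  have lt: "nz + off lsz k + r < n" using off_lt[where sz=lsz, OF k r] by simp
  have e1: "(?b + R *\<^sub>v ?W) $ (nz + off lsz k + r) = ?b $ (nz + off lsz k + r) + (R *\<^sub>v ?W) $ (nz + off lsz k + r)"
    using lt R_carrier by (intro index_add_vec(1)) auto
  show "(L *\<^sub>v ?W) $ (nz + off lsz k + r) = (?b + R *\<^sub>v ?W) $ (nz + off lsz k + r)"
    unfolding e1 L_l[OF k r] R_l[OF k r] Wv_l[OF k r]
    using C2[OF k r, of zstar] sum_split_le_gt[of "\<lambda>k'. \<Sum>j<zsz k'. PiM own dup k k' $$ (r, j) * zstar $ (nbar own dup k' ! j)" k]
    by (simp only: sum_if_gt sum_negf)
qed

end


context gs_setup begin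

lemma own_nth_N: "k < K \<Longrightarrow> j < ol k \<Longrightarrow> own k ! j < N"
proof -
  assume k: "k < K" and j: "j < ol k"
  have "own k ! j \<in> set (own k)" using j by simp
  hence "own k ! j \<in> Ns k" using own_enum[OF k] by simp
  thus ?thesis using Ns_sub[OF k] by blast
qed

lemma own_nth_Ns: "k < K \<Longrightarrow> j < ol k \<Longrightarrow> own k ! j \<in> Ns k"
proof -
  assume k: "k < K" and j: "j < ol k"
  have "own k ! j \<in> set (own k)" using j by simp
  thus "own k ! j \<in> Ns k" using own_enum[OF k] by simp
qed

lemma pd_block: assumes k: "k < K"
  and eq: "\<And>i. i < ol k \<Longrightarrow> (\<Sum>j<ol k. Q $$ (own k ! i, own k ! j) * w j) = 0"
  shows "\<And>j. j < ol k \<Longrightarrow> w j = 0"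
proof -
  define y where "y = vec N (\<lambda>b. \<Sum>j<ol k. if own k ! j = b then w j else 0)"
  have y: "y \<in> carrier_vec N" unfolding y_def by simp
  have Qy: "(Q *\<^sub>v y) $ a = (\<Sum>j<ol k. Q $$ (a, own k ! j) * w j)" if a: "a < N" for a
  proof -
    have "(Q *\<^sub>v y) $ a = (\<Sum>b<N. Q $$ (a, b) * y $ b)"
      using Qdim a unfolding mult_mat_vec_def scalar_prod_def y_def by (simp add: atLeast0LessThan)
    also have "\<dots> = (\<Sum>b<N. \<Sum>j<ol k. if own k ! j = b then Q $$ (a, b) * w j else 0)"
      unfolding y_def by (intro sum.cong refl) (simp add: sum_distrib_left if_distrib cong: if_cong)
    also have "\<dots> = (\<Sum>j<ol k. \<Sum>b<N. if own k ! j = b then Q $$ (a, b) * w j else 0)"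
      by (rule sum.swap)
    also have "\<dots> = (\<Sum>j<ol k. Q $$ (a, own k ! j) * w j)"
      by (intro sum.cong refl) (use own_nth_N[OF k] in \<open>simp add: sum.delta\<close>)
    finally show ?thesis .
  qed
  have "y \<bullet> (Q *\<^sub>v y) = (\<Sum>a<N. y $ a * (Q *\<^sub>v y) $ a)"
    using Qdim y unfolding scalar_prod_def by (simp add: atLeast0LessThan)
  also have "\<dots> = (\<Sum>a<N. \<Sum>j<ol k. if own k ! j = a then w j * (Q *\<^sub>v y) $ a else 0)"
  proof (intro sum.cong refl)
    fix a assume "a \<in> {..<N}"
    hence ya: "y $ a = (\<Sum>j<ol k. if own k ! j = a then w j else 0)" unfolding y_def by simp
    show "y $ a * (Q *\<^sub>v y) $ a = (\<Sum>j<ol k. if own k ! j = a then w j * (Q *\<^sub>v y) $ a else 0)"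
      unfolding ya sum_distrib_right by (intro sum.cong refl) simp
  qed
  also have "\<dots> = (\<Sum>j<ol k. \<Sum>a<N. if own k ! j = a then w j * (Q *\<^sub>v y) $ a else 0)"
    by (rule sum.swap)
  also have "\<dots> = (\<Sum>j<ol k. w j * (Q *\<^sub>v y) $ (own k ! j))"
    by (intro sum.cong refl) (use own_nth_N[OF k] in \<open>simp add: sum.delta\<close>)
  also have "\<dots> = 0"
    by (intro sum.neutral ballI) (use own_nth_N[OF k] in \<open>simp add: Qy eq\<close>)
  finally have "y \<bullet> (Q *\<^sub>v y) = 0" .
  hence y0: "y = 0\<^sub>v N" using Qpd[OF y] by fastforce
  fix j assume j: "j < ol k"
  have "y $ (own k ! j) = (\<Sum>j'<ol k. if own k ! j' = own k ! j then w j' else 0)"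
    unfolding y_def using own_nth_N[OF k j] by simp
  also have "\<dots> = (\<Sum>j'<ol k. if j' = j then w j' else 0)"
    by (intro sum.cong refl) (use own_enum[OF k] j in \<open>simp add: nth_eq_iff_index_eq\<close>)
  also have "\<dots> = w j" using j by simp
  finally show "w j = 0" using y0 own_nth_N[OF k j] by simp
qed
lemma L_inj: assumes x: "x \<in> carrier_vec n" and Lx: "L *\<^sub>v x = 0\<^sub>v n"
  shows "x = 0\<^sub>v n"
proof -
  define zz where "zz k j = x $ (off zsz k + j)" for k j
  define ll where "ll k r = x $ (nz + off lsz k + r)" for k r
  have xW: "x = Wv zz ll" unfolding zz_def ll_def by (rule Wv_self[OF x])
  have Lz: "(\<Sum>j<zsz k. Qloc Q Ns own dup k $$ (i,j) * zz k j)
     + (\<Sum>k'<K. if k' \<le> k then (\<Sum>r<lsz k'. PiM own dup k' k $$ (r,i) * ll k' r) else 0) = 0"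
    if k: "k < K" and i: "i < zsz k" for k i
  proof -
    have "off zsz k + i < n" using off_lt[where sz=zsz, OF k i] by simp
    hence "(L *\<^sub>v x) $ (off zsz k + i) = 0" using Lx by simp
    thus ?thesis unfolding xW L_z[OF k i] .
  qed
  have Ll: "(\<Sum>k'<K. if k' \<le> k then (\<Sum>j<zsz k'. PiM own dup k k' $$ (r,j) * zz k' j) else 0) = 0"
    if k: "k < K" and r: "r < lsz k" for k r
  proof -
    have "nz + off lsz k + r < n" using off_lt[where sz=lsz, OF k r] by simp
    hence "(L *\<^sub>v x) $ (nz + off lsz k + r) = 0" using Lx by simp
    thus ?thesis unfolding xW L_l[OF k r] .
  qed
  have main: "k < K \<longrightarrow> (\<forall>j<zsz k. zz k j = 0) \<and> (\<forall>r<lsz k. ll k r = 0)" for k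
  proof (induction k rule: less_induct)
    case (less k)
    show ?case
    proof
      assume k: "k < K"
      have IHz: "zz k' j = 0" if "k' < k" "j < zsz k'" for k' j using less that k by auto
      have IHl: "ll k' r = 0" if "k' < k" "r < lsz k'" for k' r using less that k by auto
      have zd: "zz k (ol k + r) = 0" if r: "r < lsz k" for r
      proof -
        have "0 = (\<Sum>k'<k. \<Sum>j<zsz k'. PiM own dup k k' $$ (r,j) * zz k' j) + (\<Sum>j<zsz k. PiM own dup k k $$ (r,j) * zz k j)"
          using Ll[OF k r] unfolding sum_if_le[OF k] by simp
        also have "(\<Sum>k'<k. \<Sum>j<zsz k'. PiM own dup k k' $$ (r,j) * zz k' j) = 0"
          by (intro sum.neutral ballI) (simp add: IHz)
        also have "(\<Sum>j<zsz k. PiM own dup k k $$ (r,j) * zz k j) = (\<Sum>j<zsz k. if j = ol k + r then zz k j else 0)"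
          by (intro sum.cong refl) (simp add: PiM_diag[OF r])
        also have "\<dots> = zz k (ol k + r)" using r by (simp add: zsz_eq)
        finally show ?thesis by simp
      qed
      have zo: "zz k j = 0" if j: "j < ol k" for j
      proof (rule pd_block[OF k _ j])
        fix i assume i0: "i < ol k"
        have i: "i < zsz k" using i0 by (simp add: zsz_eq)
        have "0 = (\<Sum>j<zsz k. Qloc Q Ns own dup k $$ (i,j) * zz k j)
           + ((\<Sum>k'<k. \<Sum>r<lsz k'. PiM own dup k' k $$ (r,i) * ll k' r) + (\<Sum>r<lsz k. PiM own dup k k $$ (r,i) * ll k r))"
          using Lz[OF k i] unfolding sum_if_le[OF k] by simp
        also have "(\<Sum>k'<k. \<Sum>r<lsz k'. PiM own dup k' k $$ (r,i) * ll k' r) = 0"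
          by (intro sum.neutral ballI) (simp add: IHl)
        also have "(\<Sum>r<lsz k. PiM own dup k k $$ (r,i) * ll k r) = 0"
          by (intro sum.neutral ballI) (use i0 i in \<open>simp add: PiM_diag\<close>)
        also have "(\<Sum>j<zsz k. Qloc Q Ns own dup k $$ (i,j) * zz k j)
          = (\<Sum>j<ol k. Qloc Q Ns own dup k $$ (i,j) * zz k j) + (\<Sum>r<lsz k. Qloc Q Ns own dup k $$ (i,ol k + r) * zz k (ol k + r))"
          unfolding zsz_eq by (rule sum_lt_add)
        also have "(\<Sum>r<lsz k. Qloc Q Ns own dup k $$ (i,ol k + r) * zz k (ol k + r)) = 0"
          by (intro sum.neutral ballI) (simp add: zd)
        also have "(\<Sum>j<ol k. Qloc Q Ns own dup k $$ (i,j) * zz k j) = (\<Sum>j<ol k. Q $$ (own k ! i, own k ! j) * zz k j)"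
        proof (intro sum.cong refl)
          fix j assume "j \<in> {..<ol k}"
          hence j0: "j < ol k" by simp
          hence j: "j < zsz k" by (simp add: zsz_eq)
          show "Qloc Q Ns own dup k $$ (i,j) * zz k j = Q $$ (own k ! i, own k ! j) * zz k j"
            unfolding Qloc_idx[OF i j] Let_def nbar_own[OF i0] nbar_own[OF j0]
            using own_nth_Ns[OF k i0] own_nth_Ns[OF k j0] by simp
        qed
        finally show "(\<Sum>j<ol k. Q $$ (own k ! i, own k ! j) * zz k j) = 0" by simp
      qed
      have zall: "zz k j = 0" if "j < zsz k" for j
      proof (cases "j < ol k")
        case True thus ?thesis by (rule zo)
      next
        case False
        hence "j = ol k + (j - ol k)" "j - ol k < lsz k" using that by (auto simp: zsz_eq)
        thus ?thesis using zd by metis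
      qed
      have lall: "ll k r = 0" if r: "r < lsz k" for r
      proof -
        have i: "ol k + r < zsz k" using r by (simp add: zsz_eq)
        have "0 = (\<Sum>j<zsz k. Qloc Q Ns own dup k $$ (ol k + r,j) * zz k j)
           + ((\<Sum>k'<k. \<Sum>r'<lsz k'. PiM own dup k' k $$ (r',ol k + r) * ll k' r') + (\<Sum>r'<lsz k. PiM own dup k k $$ (r',ol k + r) * ll k r'))"
          using Lz[OF k i] unfolding sum_if_le[OF k] by simp
        also have "(\<Sum>k'<k. \<Sum>r'<lsz k'. PiM own dup k' k $$ (r',ol k + r) * ll k' r') = 0"
          by (intro sum.neutral ballI) (simp add: IHl)
        also have "(\<Sum>j<zsz k. Qloc Q Ns own dup k $$ (ol k + r,j) * zz k j) = 0"
          by (intro sum.neutral ballI) (simp add: zall)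
        also have "(\<Sum>r'<lsz k. PiM own dup k k $$ (r',ol k + r) * ll k r') = (\<Sum>r'<lsz k. if r' = r then ll k r' else 0)"
          by (intro sum.cong refl) (simp add: PiM_diag[OF _ i])
        also have "\<dots> = ll k r" using r by simp
        finally show ?thesis by simp
      qed
      show "(\<forall>j<zsz k. zz k j = 0) \<and> (\<forall>r<lsz k. ll k r = 0)" using zall lall by blast
    qed
  qed
  show ?thesis
  proof (rule vec_eq_blocks[OF x])
    show "0\<^sub>v n \<in> carrier_vec n" by simp
    fix k j assume "k < K" "j < zsz k"
    thus "x $ (off zsz k + j) = 0\<^sub>v n $ (off zsz k + j)"
      using main[of k] off_lt[where sz=zsz and k=k and j=j] unfolding zz_def by simp
  next
    fix k r assume "k < K" "r < lsz k"
    thus "x $ (nz + off lsz k + r) = 0\<^sub>v n $ (nz + off lsz k + r)"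
      using main[of k] off_lt[where sz=lsz and k=k and j=r] unfolding ll_def by simp
  qed
qed
lemma L_inverse: "\<exists>B. the (mat_inverse L) = B \<and> B * L = 1\<^sub>m n \<and> B \<in> carrier_mat n n"
proof -
  have "det L \<noteq> 0"
  proof
    assume "det L = 0"
    then obtain v where "v \<in> carrier_vec n" "v \<noteq> 0\<^sub>v n" "L *\<^sub>v v = 0\<^sub>v n"
      unfolding det_0_iff_vec_prod_zero[OF L_carrier] by blast
    thus False using L_inj by blast
  qed
  hence U: "L \<in> Units (ring_mat TYPE(real) n ())" by (rule det_non_zero_imp_unit[OF L_carrier])
  show ?thesis
  proof (cases "mat_inverse L")
    case None
    from mat_inverse(1)[OF L_carrier None, of "()"] U show ?thesis by simp
  next
    case (Some B)
    from mat_inverse(2)[OF L_carrier Some] show ?thesis using Some by auto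
  qed
qed

lemma sym_prod: assumes x: "x \<in> carrier_vec N" and y: "y \<in> carrier_vec N"
  shows "x \<bullet> (Q *\<^sub>v y) = y \<bullet> (Q *\<^sub>v x)"
proof -
  have "x \<bullet> (Q *\<^sub>v y) = (transpose_mat Q *\<^sub>v x) \<bullet> y"
    by (rule transpose_vec_mult_scalar[OF Qdim y x, symmetric])
  also have "\<dots> = (Q *\<^sub>v x) \<bullet> y" using Qsym by simp
  also have "\<dots> = y \<bullet> (Q *\<^sub>v x)" by (rule comm_scalar_prod[of _ N]) (use Qdim x y in auto)
  finally show ?thesis .
qed

lemma grad_cond: assumes zd: "zstar \<in> carrier_vec N"
  and zmin: "\<And>z. z \<in> carrier_vec N \<Longrightarrow>
        1/2 * (zstar \<bullet> (Q *\<^sub>v zstar)) - c \<bullet> zstar \<le> 1/2 * (z \<bullet> (Q *\<^sub>v z)) - c \<bullet> z"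
  shows "\<And>a. a < N \<Longrightarrow> (\<Sum>b<N. Q $$ (a, b) * zstar $ b) = c $ a"
proof -
  define g where "g = Q *\<^sub>v zstar - c"
  have g: "g \<in> carrier_vec N" unfolding g_def using Qdim cdim zd by auto
  have g0: "g = 0\<^sub>v N"
  proof (rule ccontr)
    assume gn: "g \<noteq> 0\<^sub>v N"
    define p where "p = g \<bullet> (Q *\<^sub>v g)"
    have p: "p > 0" unfolding p_def by (rule Qpd[OF g gn])
    define gg where "gg = g \<bullet> g"
    have gg: "gg > 0"
    proof -
      obtain i where i: "i < N" "g $ i \<noteq> 0" using gn g by (metis eq_vecI carrier_vecD index_zero_vec)
      have "gg = (\<Sum>j<N. (g $ j)^2)" unfolding gg_def scalar_prod_def using g
        by (simp add: atLeast0LessThan power2_eq_square)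
      also have "\<dots> > 0" using i by (intro sum_pos2[of _ i]) auto
      finally show ?thesis .
    qed
    define s where "s = - gg / p"
    define w where "w = s \<cdot>\<^sub>v g"
    have w: "w \<in> carrier_vec N" unfolding w_def using g by simp
    have Qz: "Q *\<^sub>v zstar \<in> carrier_vec N" using Qdim zd by simp
    have Qw: "Q *\<^sub>v w \<in> carrier_vec N" using Qdim w by simp
    have "(zstar + w) \<bullet> (Q *\<^sub>v (zstar + w)) = zstar \<bullet> (Q *\<^sub>v zstar) + 2 * (w \<bullet> (Q *\<^sub>v zstar)) + w \<bullet> (Q *\<^sub>v w)"
    proof -
      have "(zstar + w) \<bullet> (Q *\<^sub>v (zstar + w)) = (zstar + w) \<bullet> (Q *\<^sub>v zstar + Q *\<^sub>v w)"
        using mult_add_distrib_mat_vec[OF Qdim zd w] by simp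
      also have "\<dots> = zstar \<bullet> (Q *\<^sub>v zstar) + zstar \<bullet> (Q *\<^sub>v w) + (w \<bullet> (Q *\<^sub>v zstar) + w \<bullet> (Q *\<^sub>v w))"
        using zd w Qz Qw by (simp add: add_scalar_prod_distrib[of _ N] scalar_prod_add_distrib[of _ N])
      also have "zstar \<bullet> (Q *\<^sub>v w) = w \<bullet> (Q *\<^sub>v zstar)" by (rule sym_prod[OF zd w])
      finally show ?thesis by simp
    qed
    moreover have "c \<bullet> (zstar + w) = c \<bullet> zstar + c \<bullet> w"
      using cdim zd w by (simp add: scalar_prod_add_distrib[of _ N])
    moreover have "w \<bullet> (Q *\<^sub>v zstar) - c \<bullet> w = s * gg"
    proof -
      have "c \<bullet> w = w \<bullet> c" by (rule comm_scalar_prod[OF cdim w])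
      hence "w \<bullet> (Q *\<^sub>v zstar) - c \<bullet> w = w \<bullet> g"
        unfolding g_def using w Qz cdim by (simp add: scalar_prod_minus_distrib[of _ N])
      also have "\<dots> = s * gg" unfolding w_def gg_def using g by simp
      finally show ?thesis .
    qed
    moreover have "w \<bullet> (Q *\<^sub>v w) = s * s * p"
      unfolding w_def p_def using g Qdim by (simp add: mult_mat_vec[OF Qdim g])
    ultimately have "1/2 * ((zstar + w) \<bullet> (Q *\<^sub>v (zstar + w))) - c \<bullet> (zstar + w)
       = 1/2 * (zstar \<bullet> (Q *\<^sub>v zstar)) - c \<bullet> zstar + (s * gg + s * s * p / 2)" by (simp add: algebra_simps)
    moreover have "s * gg + s * s * p / 2 < 0"
    proof -
      have "s * gg + s * s * p / 2 = - (gg * gg) / (2 * p)" unfolding s_def using p by (simp add: field_simps power2_eq_square)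
      also have "\<dots> < 0" using p gg by (simp add: divide_neg_pos)
      finally show ?thesis .
    qed
    moreover have "1/2 * (zstar \<bullet> (Q *\<^sub>v zstar)) - c \<bullet> zstar \<le> 1/2 * ((zstar + w) \<bullet> (Q *\<^sub>v (zstar + w))) - c \<bullet> (zstar + w)"
      by (rule zmin) (use zd w in simp)
    ultimately show False by linarith
  qed
  fix a assume a: "a < N"
  have "g $ a = 0" using g0 a by simp
  moreover have "g $ a = (\<Sum>b<N. Q $$ (a, b) * zstar $ b) - c $ a"
    unfolding g_def using a Qdim zd cdim by (simp add: scalar_prod_def atLeast0LessThan)
  ultimately show "(\<Sum>b<N. Q $$ (a, b) * zstar $ b) = c $ a" by simp
qed

end



lemma pow_smult_mat: assumes B: "(B :: 'a :: comm_ring_1 mat) \<in> carrier_mat m m"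
  shows "(a \<cdot>\<^sub>m B) ^\<^sub>m k = a ^ k \<cdot>\<^sub>m (B ^\<^sub>m k)"
proof (induction k)
  case 0 show ?case using B by (intro eq_matI) auto
next
  case (Suc k)
  have "(a \<cdot>\<^sub>m B) ^\<^sub>m Suc k = (a ^ k \<cdot>\<^sub>m (B ^\<^sub>m k)) * (a \<cdot>\<^sub>m B)" using Suc by simp
  also have "\<dots> = a ^ Suc k \<cdot>\<^sub>m (B ^\<^sub>m Suc k)"
    using B by (simp add: mult_smult_assoc_mat[of _ m m _ m] mult_smult_distrib[of _ m m _ m], intro eq_matI, auto simp: ac_simps)
  finally show ?case .
qed

lemma eigenvalue_smult: assumes A: "(A :: complex mat) \<in> carrier_mat m m" and ev: "eigenvalue (a \<cdot>\<^sub>m A) mu" and False: "a \<noteq> 0"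
  shows "eigenvalue A (mu / a)"
proof -
  from ev obtain v where v: "v \<in> carrier_vec m" "v \<noteq> 0\<^sub>v m" "(a \<cdot>\<^sub>m A) *\<^sub>v v = mu \<cdot>\<^sub>v v"
    unfolding eigenvalue_def eigenvector_def using A by auto
  show ?thesis
  proof -
    have "A *\<^sub>v v = (mu / a) \<cdot>\<^sub>v v"
    proof -
      have "(a \<cdot>\<^sub>m A) *\<^sub>v v = a \<cdot>\<^sub>v (A *\<^sub>v v)" using A v(1) by (intro eq_vecI) auto
      hence "a \<cdot>\<^sub>v (A *\<^sub>v v) = mu \<cdot>\<^sub>v v" using v(3) by simp
      hence "(1/a) \<cdot>\<^sub>v (a \<cdot>\<^sub>v (A *\<^sub>v v)) = (1/a) \<cdot>\<^sub>v (mu \<cdot>\<^sub>v v)" by simp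
      thus ?thesis using False by (simp add: smult_smult_assoc)
    qed
    thus ?thesis unfolding eigenvalue_def eigenvector_def using v A by auto
  qed
qed
lemma pow_decay: fixes S :: "real mat"
  assumes S: "S \<in> carrier_mat m m"
  and spec: "\<And>mu. eigenvalue (map_mat complex_of_real S) mu \<Longrightarrow> cmod mu < 1"
  shows "\<exists>C r. 0 < r \<and> r < 1 \<and> (\<forall>k i j. i < m \<longrightarrow> j < m \<longrightarrow> \<bar>(S ^\<^sub>m k) $$ (i,j)\<bar> \<le> C * r ^ k)"
proof (cases "m = 0")
  case True
  show ?thesis by (rule exI[of _ 0], rule exI[of _ "1/2"]) (simp add: True)
next
  case False
  hence m: "m > 0" by simp
  define A where "A = map_mat complex_of_real S"
  have A: "A \<in> carrier_mat m m" unfolding A_def using S by simp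
  define rho where "rho = spectral_radius A"
  from spectral_radius_mem_max(1)[OF A m] obtain mu0 where mu0: "mu0 \<in> spectrum A" "rho = norm mu0"
    unfolding rho_def by auto
  have rho1: "rho < 1" using spec[of mu0] mu0 unfolding spectrum_def A_def by simp
  have rho0: "rho \<ge> 0" using mu0 by simp
  define r where "r = (1 + rho) / 2"
  have r0: "0 < r" and r1: "r < 1" and rr: "rho < r" using rho1 rho0 unfolding r_def by auto
  define A' where "A' = complex_of_real (1 / r) \<cdot>\<^sub>m A"
  have A': "A' \<in> carrier_mat m m" unfolding A'_def using A by simp
  have "spectral_radius A' < 1"
  proof -
    from spectral_radius_mem_max(1)[OF A' m] obtain mu where mu: "mu \<in> spectrum A'" "spectral_radius A' = norm mu"
      by auto
    have "eigenvalue A (mu / complex_of_real (1 / r))"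
      by (rule eigenvalue_smult[OF A]) (use mu r0 in \<open>auto simp: spectrum_def A'_def\<close>)
    hence "norm (mu / complex_of_real (1 / r)) \<in> norm ` spectrum A" unfolding spectrum_def by auto
    from spectral_radius_mem_max(2)[OF A m this] have "norm (mu / complex_of_real (1 / r)) \<le> rho"
      unfolding rho_def .
    hence "norm mu * r \<le> rho" using r0 by (simp add: norm_divide norm_mult)
    hence "norm mu * r < 1 * r" using rr by simp
    hence "norm mu < 1" using r0 by (simp only: mult_less_cancel_right_pos)
    thus ?thesis using mu by simp
  qed
  from spectral_radius_jnf_norm_bound_less_1_upper_triangular[OF A' this]
  obtain c where c: "\<And>k. norm_bound (A' ^\<^sub>m k) c" by auto
  have AA: "A = complex_of_real r \<cdot>\<^sub>m A'" unfolding A'_def using A r0 by (intro eq_matI) auto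
  have "\<forall>k i j. i < m \<longrightarrow> j < m \<longrightarrow> \<bar>(S ^\<^sub>m k) $$ (i,j)\<bar> \<le> c * r ^ k"
  proof (intro allI impI)
    fix k i j assume i: "i < m" and j: "j < m"
    have "map_mat complex_of_real (S ^\<^sub>m k) = A ^\<^sub>m k" unfolding A_def by (rule of_real_hom.mat_hom_pow[OF S])
    also have "\<dots> = (complex_of_real r) ^ k \<cdot>\<^sub>m (A' ^\<^sub>m k)" unfolding AA by (rule pow_smult_mat[OF A'])
    finally have e: "map_mat complex_of_real (S ^\<^sub>m k) = (complex_of_real r) ^ k \<cdot>\<^sub>m (A' ^\<^sub>m k)" .
    have "complex_of_real ((S ^\<^sub>m k) $$ (i,j)) = map_mat complex_of_real (S ^\<^sub>m k) $$ (i,j)"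
      using S i j by simp
    also have "\<dots> = (complex_of_real r) ^ k * (A' ^\<^sub>m k) $$ (i,j)" unfolding e using A' i j by simp
    finally have "\<bar>(S ^\<^sub>m k) $$ (i,j)\<bar> = r ^ k * norm ((A' ^\<^sub>m k) $$ (i,j))"
      using r0 by (metis norm_mult norm_of_real norm_power abs_of_pos)
    also have "\<dots> \<le> r ^ k * c" using c[of k] A' i j r0 unfolding norm_bound_def
      by (intro mult_left_mono) auto
    finally show "\<bar>(S ^\<^sub>m k) $$ (i,j)\<bar> \<le> c * r ^ k" by (simp add: mult.commute)
  qed
  thus ?thesis using r0 r1 by blast
qed
context gs_setup begin

lemma conv:
  assumes zstar_dim: "zstar \<in> carrier_vec N"
    and zstar_min: "\<And>z. z \<in> carrier_vec N \<Longrightarrow>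
        1/2 * (zstar \<bullet> (Q *\<^sub>v zstar)) - c \<bullet> zstar \<le> 1/2 * (z \<bullet> (Q *\<^sub>v z)) - c \<bullet> z"
    and GS_z: "\<And>l k i. k < K \<Longrightarrow> i < lenk own dup k \<Longrightarrow>
        (\<Sum>j<lenk own dup k. Qloc Q Ns own dup k $$ (i, j) * zs (Suc l) k j)
        + (\<Sum>r<length (dup k). PiM own dup k k $$ (r, i) * lams (Suc l) k r)
        = cloc c Ns own dup k $ i
          - (\<Sum>k'<k. \<Sum>r<length (dup k'). PiM own dup k' k $$ (r, i) * lams (Suc l) k' r)
          - (\<Sum>k'\<in>{k<..<K}. \<Sum>r<length (dup k'). PiM own dup k' k $$ (r, i) * lams l k' r)"
    and GS_lam: "\<And>l k r. k < K \<Longrightarrow> r < length (dup k) \<Longrightarrow>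
        (\<Sum>j<lenk own dup k. PiM own dup k k $$ (r, j) * zs (Suc l) k j)
        = - (\<Sum>k'<k. \<Sum>j<lenk own dup k'. PiM own dup k k' $$ (r, j) * zs (Suc l) k' j)
          - (\<Sum>k'\<in>{k<..<K}. \<Sum>j<lenk own dup k'. PiM own dup k k' $$ (r, j) * zs l k' j)"
    and spec: "\<And>\<mu>. eigenvalue (map_mat complex_of_real (Sigma Q Ns K own dup)) \<mu> \<Longrightarrow> cmod \<mu> < 1"
  shows "\<forall>k<K. \<forall>i<lenk own dup k. (\<lambda>l. zs l k i) \<longlonglongrightarrow> zstar $ (nbar own dup k ! i)"
proof -
  note grad = grad_cond[OF zstar_dim zstar_min]
  define Ws where "Ws = Wstar zstar"
  have star: "L *\<^sub>v Ws = bvec + R *\<^sub>v Ws" unfolding Ws_def by (rule Star[OF grad])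
  define W where "W l = Wv (zs l) (lams l)" for l
  have step: "L *\<^sub>v W (Suc l) = bvec + R *\<^sub>v W l" for l
    unfolding W_def bvec_def by (rule GS_step) (use GS_z GS_lam in auto)
  define e where "e l = W l - Ws" for l
  have Wc: "W l \<in> carrier_vec n" for l unfolding W_def by simp
  have Wsc: "Ws \<in> carrier_vec n" unfolding Ws_def Wstar_def by simp
  have bc: "bvec \<in> carrier_vec n" unfolding bvec_def by simp
  have ec: "e l \<in> carrier_vec n" for l unfolding e_def using Wc Wsc by simp
  have Le: "L *\<^sub>v e (Suc l) = R *\<^sub>v e l" for l
  proof -
    have "L *\<^sub>v e (Suc l) = L *\<^sub>v W (Suc l) - L *\<^sub>v Ws"
      unfolding e_def by (rule mult_minus_distrib_mat_vec[OF L_carrier Wc Wsc])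
    also have "\<dots> = (bvec + R *\<^sub>v W l) - (bvec + R *\<^sub>v Ws)" unfolding step star ..
    also have "\<dots> = R *\<^sub>v W l - R *\<^sub>v Ws"
      using bc R_carrier Wc Wsc by (intro eq_vecI) auto
    also have "\<dots> = R *\<^sub>v e l"
      unfolding e_def by (rule mult_minus_distrib_mat_vec[OF R_carrier Wc Wsc, symmetric])
    finally show ?thesis .
  qed
  obtain B where B: "the (mat_inverse L) = B" "B * L = 1\<^sub>m n" "B \<in> carrier_mat n n"
    using L_inverse by blast
  define S where "S = Sigma Q Ns K own dup"
  have S_eq: "S = B * R" unfolding S_def Sigma_def B(1) ..
  have Sc: "S \<in> carrier_mat n n" unfolding S_eq using B(3) R_carrier by simp
  have eS: "e (Suc l) = S *\<^sub>v e l" for l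
  proof -
    have "e (Suc l) = (B * L) *\<^sub>v e (Suc l)" unfolding B(2) using ec by simp
    also have "\<dots> = B *\<^sub>v (L *\<^sub>v e (Suc l))" by (rule assoc_mult_mat_vec[OF B(3) L_carrier ec])
    also have "\<dots> = B *\<^sub>v (R *\<^sub>v e l)" unfolding Le ..
    also have "\<dots> = S *\<^sub>v e l" unfolding S_eq by (rule assoc_mult_mat_vec[OF B(3) R_carrier ec, symmetric])
    finally show ?thesis .
  qed
  have epow: "e (l + m) = (S ^\<^sub>m l) *\<^sub>v e m" for l m
  proof (induction l arbitrary: m)
    case 0 show ?case using ec Sc by simp
  next
    case (Suc l)
    have "e (Suc l + m) = e (l + Suc m)" by simp
    also have "\<dots> = (S ^\<^sub>m l) *\<^sub>v (S *\<^sub>v e m)" unfolding Suc eS ..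
    also have "\<dots> = (S ^\<^sub>m l * S) *\<^sub>v e m"
      by (rule assoc_mult_mat_vec[symmetric]) (use Sc ec in auto)
    finally show ?case by simp
  qed
  obtain C r where r0: "0 < r" and r1: "r < 1"
    and Cb: "\<And>k i j. i < n \<Longrightarrow> j < n \<Longrightarrow> \<bar>(S ^\<^sub>m k) $$ (i,j)\<bar> \<le> C * r ^ k"
    using pow_decay[OF Sc spec[folded S_def]] by blast
  have e0: "(\<lambda>l. e l $ p) \<longlonglongrightarrow> 0" if p: "p < n" for p
  proof -
    define D where "D = C * (\<Sum>q<n. \<bar>e 0 $ q\<bar>)"
    have bound: "norm (e l $ p) \<le> D * r ^ l" for l
    proof -
      have "e l $ p = (\<Sum>q<n. (S ^\<^sub>m l) $$ (p, q) * e 0 $ q)"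
        using epow[of l 0] p Sc ec[of 0] by (simp add: scalar_prod_def atLeast0LessThan)
      hence "norm (e l $ p) \<le> (\<Sum>q<n. \<bar>(S ^\<^sub>m l) $$ (p, q)\<bar> * \<bar>e 0 $ q\<bar>)"
        by (simp add: abs_mult[symmetric] sum_abs)
      also have "\<dots> \<le> (\<Sum>q<n. C * r ^ l * \<bar>e 0 $ q\<bar>)"
        by (intro sum_mono mult_right_mono) (use Cb p in auto)
      also have "\<dots> = D * r ^ l" unfolding D_def by (simp add: sum_distrib_left sum_distrib_right ac_simps)
      finally show ?thesis .
    qed
    have "(\<lambda>l. D * r ^ l) \<longlonglongrightarrow> D * 0"
      by (intro tendsto_mult_left LIMSEQ_power_zero) (use r0 r1 in auto)
    hence lim: "(\<lambda>l. D * r ^ l) \<longlonglongrightarrow> 0" by simp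
    show ?thesis by (rule Lim_null_comparison[OF _ lim]) (use bound in auto)
  qed
  show ?thesis
  proof (intro allI impI)
    fix k i assume k: "k < K" and i: "i < zsz k"
    have p: "off zsz k + i < n" using off_lt[where sz=zsz, OF k i] by simp
    have ee: "e l $ (off zsz k + i) = zs l k i - zstar $ (nbar own dup k ! i)" for l
    proof -
      have "e l $ (off zsz k + i) = W l $ (off zsz k + i) - Ws $ (off zsz k + i)"
        unfolding e_def by (rule index_minus_vec(1)) (use p Wsc in auto)
      thus ?thesis unfolding W_def Ws_def Wstar_def using k i by simp
    qed
    have "(\<lambda>l. e l $ (off zsz k + i) + zstar $ (nbar own dup k ! i)) \<longlonglongrightarrow> 0 + zstar $ (nbar own dup k ! i)"
      by (intro tendsto_add e0[OF p] tendsto_const)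
    thus "(\<lambda>l. zs l k i) \<longlonglongrightarrow> zstar $ (nbar own dup k ! i)" unfolding ee by simp
  qed
qed

end


theorem proposition1:
  fixes N K :: nat and Q :: "real mat" and c :: "real vec" and zstar :: "real vec"
    and Ns :: "nat \<Rightarrow> nat set" and own dup :: "nat \<Rightarrow> nat list"
    and zs :: "nat \<Rightarrow> nat \<Rightarrow> nat \<Rightarrow> real" and lams :: "nat \<Rightarrow> nat \<Rightarrow> nat \<Rightarrow> real"
  assumes Qdim: "Q \<in> carrier_mat N N" and cdim: "c \<in> carrier_vec N"
    and Qsym: "transpose_mat Q = Q"
    and Qpd: "\<And>x. x \<in> carrier_vec N \<Longrightarrow> x \<noteq> 0\<^sub>v N \<Longrightarrow> x \<bullet> (Q *\<^sub>v x) > 0"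
    and zstar_dim: "zstar \<in> carrier_vec N"
    and zstar_min: "\<And>z. z \<in> carrier_vec N \<Longrightarrow>
        1/2 * (zstar \<bullet> (Q *\<^sub>v zstar)) - c \<bullet> zstar \<le> 1/2 * (z \<bullet> (Q *\<^sub>v z)) - c \<bullet> z"
    and part_ne: "\<And>k. k < K \<Longrightarrow> Ns k \<noteq> {}"
    and part_disj: "\<And>k k'. k < K \<Longrightarrow> k' < K \<Longrightarrow> k \<noteq> k' \<Longrightarrow> Ns k \<inter> Ns k' = {}"
    and part_cover: "(\<Union>k<K. Ns k) = {..<N}"
    and own_enum: "\<And>k. k < K \<Longrightarrow> distinct (own k) \<and> set (own k) = Ns k"
    and dup_enum: "\<And>k. k < K \<Longrightarrow> distinct (dup k) \<and> set (dup k) = dupset Q N Ns k"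
    and GS_z: "\<And>l k i. k < K \<Longrightarrow> i < lenk own dup k \<Longrightarrow>
        (\<Sum>j<lenk own dup k. Qloc Q Ns own dup k $$ (i, j) * zs (Suc l) k j)
        + (\<Sum>r<length (dup k). PiM own dup k k $$ (r, i) * lams (Suc l) k r)
        = cloc c Ns own dup k $ i
          - (\<Sum>k'<k. \<Sum>r<length (dup k'). PiM own dup k' k $$ (r, i) * lams (Suc l) k' r)
          - (\<Sum>k'\<in>{k<..<K}. \<Sum>r<length (dup k'). PiM own dup k' k $$ (r, i) * lams l k' r)"
    and GS_lam: "\<And>l k r. k < K \<Longrightarrow> r < length (dup k) \<Longrightarrow>
        (\<Sum>j<lenk own dup k. PiM own dup k k $$ (r, j) * zs (Suc l) k j)
        = - (\<Sum>k'<k. \<Sum>j<lenk own dup k'. PiM own dup k k' $$ (r, j) * zs (Suc l) k' j)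
          - (\<Sum>k'\<in>{k<..<K}. \<Sum>j<lenk own dup k'. PiM own dup k k' $$ (r, j) * zs l k' j)"
    and spec: "\<And>\<mu>. eigenvalue (map_mat complex_of_real (Sigma Q Ns K own dup)) \<mu> \<Longrightarrow> cmod \<mu> < 1"
  shows "\<forall>k<K. \<forall>i<lenk own dup k. (\<lambda>l. zs l k i) \<longlonglongrightarrow> zstar $ (nbar own dup k ! i)"
proof -
  have loc: "gs_setup N K Q c Ns own dup"
    by unfold_locales (fact Qdim cdim Qsym Qpd part_disj part_cover own_enum dup_enum)+
  show ?thesis
    by (rule gs_setup.conv[OF loc]) (fact zstar_dim zstar_min GS_z GS_lam spec)+
qed

end
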